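(* Let $A$ be a nontrivial closed class of decision tables from $\mathcal M_2^\infty$ and $\psi$ a bounded complexity measure. If $\mathcal H^\infty_{\psi,A}$ is everywhere defined, then for every $n\in\omega$ the value $Z_{\psi,A}(n)$ is defined and $\mathcal H^\infty_{\psi,A}(3n)\ge\sqrt{2Z_{\psi,A}(n)}-3$.
   Context: Notation: $\omega=\{0,1,2,\dots\}$; $\mathcal P(\omega)$ is the set of nonempty finite subsets of $\omega$; $E_2=\{0,1\}$. $P=\{f_i:i\in\omega\}$ is a set of attributes, $f_i\neq f_j$ for $i\ne j$. Decision tables: $\mathcal M_2^\infty$ is the set of rectangular tables filled with numbers from $E_2$, whose columns are labeled with pairwise different attributes from $P$, whose rows are pairwise different, and each row of which is labeled with a set from $\mathcal P(\omega)$ (its set of decisions). The empty table (no rows) is denoted $\Lambda$ and belongs to $\mathcal M_2^\infty$. For $T\in\mathcal M_2^\infty$: $\Pi(T)$ is the intersection of the decision sets of all rows (common decisions); $\mathrm{At}(T)$ is the set of attributes labeling columns; $N(T)$ is the number of rows. For nonempty $T$ and a word $\alpha=(f_{i_1},\delta_1)\cdots(f_{i_m},\delta_m)$ with $f_{i_j}\in\mathrm{At}(T)$, $\delta_j\in E_2$, $T\alpha$ is the subtable of $T$ consisting of the rows having value $\delta_j$ in the column $f_{i_j}$ for all $j$; $T\lambda=T$ for the empty word $\lambda$. Operations: for $D\subseteq\mathrm{At}(T)$, $I(D,T)$ is obtained from $T$ by deleting the columns labeled with attributes from $D$ and, in each group of rows coinciding on the remaining columns, keeping only the first row; $I(\mathrm{At}(T),T)=\Lambda$.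 For $\nu:E_2^{|\mathrm{At}(T)|}\to\mathcal P(\omega)$, $J(\nu,T)$ is obtained by replacing the decision set of each row $\bar\delta$ by $\nu(\bar\delta)$. $[T]=\{J(\nu,I(D,T)):D\subseteq\mathrm{At}(T),\ \nu:E_2^{|\mathrm{At}(T)\setminus D|}\to\mathcal P(\omega)\}$; for nonempty $A\subseteq\mathcal M_2^\infty$, $[A]=\bigcup_{T\in A}[T]$. $A$ is a closed class if $[A]=A$; nontrivial if it contains a nonempty table. Decision trees: a $2$-decision tree is a finite directed rooted tree with at least two nodes in which the root and the edges leaving the root are unlabeled, each terminal node is labeled with a decision from $\omega$, and each other node is labeled with an attribute from $P$, each edge leaving such a node being labeled with a number from $E_2$. $\mathrm{At}(\Gamma)$ is the set of attributes labeling nodes of $\Gamma$. For a complete path $\tau=v_1,d_1,\dots,v_m,d_m,v_{m+1}$ (from the root to a terminal node), $\pi(\tau)=\lambda$ if $m=1$, and otherwise $\pi(\tau)=(f_{i_2},\delta_2)\cdots(f_{i_m},\delta_m)$ where $v_j$ is labeled $f_{i_j}$ and $d_j$ is labeled $\delta_j$; $T(\tau)=T\pi(\tau)$. For $T\ne\Lambda$, a nondeterministic decision tree for $T$ is a $2$-decision tree $\Gamma$ with $\mathrm{At}(\Gamma)\subseteq\mathrm{At}(T)$ such that every row of $T$ belongs to $T(\tau)$ for some complete path $\tau$, and for every complete path $\tau$ either $T(\tau)=\Lambda$ or the decision at the terminal node of $\tau$ belongs to $\Pi(T(\tau))$. A deterministic decision tree for $T$ is a nondeterministic decision tree for $T$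 in which, additionally, exactly one edge leaves the root and the edges leaving any node that is neither the root nor terminal are labeled with pairwise different numbers. Complexity measures: a partially bounded complexity measure is a function $\psi:P^*\to\omega$ on finite words over $P$ such that for all words $\alpha_1,\alpha_2$: $\psi(\alpha_1)=0$ iff $\alpha_1=\lambda$; $\psi(\alpha_1)$ is invariant under permutation of letters; $\psi(\alpha_1)\le\psi(\alpha_1\alpha_2)$; $\psi(\alpha_1\alpha_2)\le\psi(\alpha_1)+\psi(\alpha_2)$. It is bounded if in addition $\psi(\alpha)\ge|\alpha|$ for all $\alpha$. $\psi$ is extended to words $(f_{i_1},\delta_1)\cdots(f_{i_m},\delta_m)$ by $\psi(f_{i_1}\cdots f_{i_m})$ ($\psi(\lambda)=0$). For a $2$-decision tree $\Gamma$, $\psi(\Gamma)=\max_\tau\psi(\pi(\tau))$ over complete paths. For $T\ne\Lambda$, $\psi^d(T)$ (resp. $\psi^a(T)$) is the minimum of $\psi(\Gamma)$ over deterministic (resp. nondeterministic) decision trees $\Gamma$ for $T$; $\psi^d(\Lambda)=\psi^a(\Lambda)=0$. Parameters: $m_\psi(T)=\max\{\psi(f_i):f_i\in\mathrm{At}(T)\}$, $m_\psi(\Lambda)=0$. A table $Q\in\mathcal M_2^\infty$ is complete if $N(Q)=2^{|\mathrm{At}(Q)|}$; $Z(T)$ is the maximum number of columns of a complete table in $[T]$ if such tables exist, and $0$ otherwise; $Z(\Lambda)=0$. For $n\in\omega$: $A_\psi(n)=\{T\in A:m_\psi(T)\le n\}$; $Z_{\psi,A}(n)$ is undefined if $\{Z(T):T\in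 A_\psi(n)\}$ is infinite, else its maximum; $\mathcal H^\infty_{\psi,A}(n)$ is undefined if $\{\psi^d(T):T\in A,\psi^a(T)\le n\}$ is infinite, else its maximum. *)

theory Defs
  imports Complex_Main "HOL-Library.Multiset"
begin

(* Attributes f_i are identified with their indices i :: nat.
   E_2 = {0,1} is represented by bool (False = 0, True = 1). *)

datatype tab = Tab (attrs: "nat list") (rows: "(bool list \<times> nat set) list")

definition Lambda :: tab where "Lambda = Tab [] []"

definition wf_tab :: "tab \<Rightarrow> bool" where
  "wf_tab T \<longleftrightarrow> distinct (attrs T)
     \<and> (\<forall>r\<in>set (rows T). length (fst r) = length (attrs T) \<and> finite (snd r) \<and> snd r \<noteq> {})
     \<and> distinct (map fst (rows T))
     \<and> (attrs T = [] \<longleftrightarrow> rows T = [])"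

definition M2 :: "tab set" where "M2 = {T. wf_tab T}"

definition At :: "tab \<Rightarrow> nat set" where "At T = set (attrs T)"

definition N :: "tab \<Rightarrow> nat" where "N T = length (rows T)"

definition rval :: "tab \<Rightarrow> bool list \<times> nat set \<Rightarrow> nat \<Rightarrow> bool" where
  "rval T r f = the (map_of (zip (attrs T) (fst r)) f)"

definition sub_rows :: "tab \<Rightarrow> (nat \<times> bool) list \<Rightarrow> (bool list \<times> nat set) list" where
  "sub_rows T \<alpha> = filter (\<lambda>r. \<forall>(f,\<delta>)\<in>set \<alpha>. rval T r f = \<delta>) (rows T)"

definition Pi_rows :: "(bool list \<times> nat set) list \<Rightarrow> nat set" where
  "Pi_rows rs = (\<Inter>r\<in>set rs. snd r)"

fun dedup :: "('a \<times> 'b) list \<Rightarrow> ('a \<times> 'b) list" where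
  "dedup [] = []"
| "dedup (x # xs) = x # dedup (filter (\<lambda>y. fst y \<noteq> fst x) xs)"

definition I_op :: "nat set \<Rightarrow> tab \<Rightarrow> tab" where
  "I_op D T = (if At T \<subseteq> D then Lambda else
     Tab (filter (\<lambda>f. f \<notin> D) (attrs T))
         (dedup (map (\<lambda>r. (map snd (filter (\<lambda>p. fst p \<notin> D) (zip (attrs T) (fst r))), snd r))
                     (rows T))))"

definition J_op :: "(bool list \<Rightarrow> nat set) \<Rightarrow> tab \<Rightarrow> tab" where
  "J_op \<nu> T = Tab (attrs T) (map (\<lambda>r. (fst r, \<nu> (fst r))) (rows T))"

definition cl_tab :: "tab \<Rightarrow> tab set" where
  "cl_tab T = {J_op \<nu> (I_op D T) | D \<nu>. D \<subseteq> At T \<and>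
       (\<forall>\<delta>. length \<delta> = card (At T - D) \<longrightarrow> finite (\<nu> \<delta>) \<and> \<nu> \<delta> \<noteq> {})}"

definition cl :: "tab set \<Rightarrow> tab set" where
  "cl A = (\<Union>T\<in>A. cl_tab T)"

definition closed_class :: "tab set \<Rightarrow> bool" where
  "closed_class A \<longleftrightarrow> A \<subseteq> M2 \<and> A \<noteq> {} \<and> cl A = A"

definition nontrivial :: "tab set \<Rightarrow> bool" where
  "nontrivial A \<longleftrightarrow> (\<exists>T\<in>A. T \<noteq> Lambda)"

(* 2-decision trees: the root is represented by the (nonempty) list of its children;
   Leaf d is a terminal node labelled with decision d; Node f cs is a node labelled with
   attribute f whose outgoing edges are labelled by the numbers in cs. *)
datatype dtree = Leaf nat | Node nat "(bool \<times> dtree) list"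

fun wf_node :: "dtree \<Rightarrow> bool" where
  "wf_node (Leaf d) = True"
| "wf_node (Node f cs) = (cs \<noteq> [] \<and> (\<forall>p\<in>set cs. wf_node (snd p)))"

definition wf_dtree :: "dtree list \<Rightarrow> bool" where
  "wf_dtree \<Gamma> \<longleftrightarrow> \<Gamma> \<noteq> [] \<and> (\<forall>v\<in>set \<Gamma>. wf_node v)"

fun node_atts :: "dtree \<Rightarrow> nat set" where
  "node_atts (Leaf d) = {}"
| "node_atts (Node f cs) = insert f (\<Union>p\<in>set cs. node_atts (snd p))"

definition tree_atts :: "dtree list \<Rightarrow> nat set" where
  "tree_atts \<Gamma> = (\<Union>v\<in>set \<Gamma>. node_atts v)"

fun node_paths :: "dtree \<Rightarrow> ((nat \<times> bool) list \<times> nat) list" where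
  "node_paths (Leaf d) = [([], d)]"
| "node_paths (Node f cs) =
     concat (map (\<lambda>p. map (\<lambda>wd. ((f, fst p) # fst wd, snd wd)) (node_paths (snd p))) cs)"

definition tree_paths :: "dtree list \<Rightarrow> ((nat \<times> bool) list \<times> nat) list" where
  "tree_paths \<Gamma> = concat (map node_paths \<Gamma>)"

definition nondet_tree_for :: "dtree list \<Rightarrow> tab \<Rightarrow> bool" where
  "nondet_tree_for \<Gamma> T \<longleftrightarrow> wf_dtree \<Gamma> \<and> tree_atts \<Gamma> \<subseteq> At T
     \<and> (\<forall>r\<in>set (rows T). \<exists>\<tau>\<in>set (tree_paths \<Gamma>). r \<in> set (sub_rows T (fst \<tau>)))
     \<and> (\<forall>\<tau>\<in>set (tree_paths \<Gamma>). sub_rows T (fst \<tau>) = [] \<or> snd \<tau> \<in> Pi_rows (sub_rows T (fst \<tau>)))"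

fun det_node :: "dtree \<Rightarrow> bool" where
  "det_node (Leaf d) = True"
| "det_node (Node f cs) = (distinct (map fst cs) \<and> (\<forall>p\<in>set cs. det_node (snd p)))"

definition det_tree_for :: "dtree list \<Rightarrow> tab \<Rightarrow> bool" where
  "det_tree_for \<Gamma> T \<longleftrightarrow> nondet_tree_for \<Gamma> T \<and> length \<Gamma> = 1 \<and> (\<forall>v\<in>set \<Gamma>. det_node v)"

definition pb_measure :: "(nat list \<Rightarrow> nat) \<Rightarrow> bool" where
  "pb_measure \<psi> \<longleftrightarrow>
     (\<forall>a. \<psi> a = 0 \<longleftrightarrow> a = [])
   \<and> (\<forall>a b. mset a = mset b \<longrightarrow> \<psi> a = \<psi> b)
   \<and> (\<forall>a b. \<psi> a \<le> \<psi> (a @ b))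
   \<and> (\<forall>a b. \<psi> (a @ b) \<le> \<psi> a + \<psi> b)"

definition bounded_measure :: "(nat list \<Rightarrow> nat) \<Rightarrow> bool" where
  "bounded_measure \<psi> \<longleftrightarrow> pb_measure \<psi> \<and> (\<forall>a. length a \<le> \<psi> a)"

definition psi_tree :: "(nat list \<Rightarrow> nat) \<Rightarrow> dtree list \<Rightarrow> nat" where
  "psi_tree \<psi> \<Gamma> = Max ((\<lambda>\<tau>. \<psi> (map fst (fst \<tau>))) ` set (tree_paths \<Gamma>))"

definition psi_d :: "(nat list \<Rightarrow> nat) \<Rightarrow> tab \<Rightarrow> nat" where
  "psi_d \<psi> T = (if T = Lambda then 0 else LEAST k. \<exists>\<Gamma>. det_tree_for \<Gamma> T \<and> psi_tree \<psi> \<Gamma> = k)"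

definition psi_a :: "(nat list \<Rightarrow> nat) \<Rightarrow> tab \<Rightarrow> nat" where
  "psi_a \<psi> T = (if T = Lambda then 0 else LEAST k. \<exists>\<Gamma>. nondet_tree_for \<Gamma> T \<and> psi_tree \<psi> \<Gamma> = k)"

definition m_psi :: "(nat list \<Rightarrow> nat) \<Rightarrow> tab \<Rightarrow> nat" where
  "m_psi \<psi> T = (if At T = {} then 0 else Max ((\<lambda>f. \<psi> [f]) ` At T))"

definition complete_tab :: "tab \<Rightarrow> bool" where
  "complete_tab Q \<longleftrightarrow> N Q = 2 ^ card (At Q)"

definition Z :: "tab \<Rightarrow> nat" where
  "Z T = (if T = Lambda \<or> \<not> (\<exists>Q\<in>cl_tab T. complete_tab Q) then 0
          else Max {card (At Q) | Q. Q \<in> cl_tab T \<and> complete_tab Q})"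

definition A_psi :: "(nat list \<Rightarrow> nat) \<Rightarrow> tab set \<Rightarrow> nat \<Rightarrow> tab set" where
  "A_psi \<psi> A n = {T\<in>A. m_psi \<psi> T \<le> n}"

(* None = undefined *)
definition Z_psiA :: "(nat list \<Rightarrow> nat) \<Rightarrow> tab set \<Rightarrow> nat \<Rightarrow> nat option" where
  "Z_psiA \<psi> A n = (let S = Z ` A_psi \<psi> A n in if finite S then Some (Max S) else None)"

definition H_psiA :: "(nat list \<Rightarrow> nat) \<Rightarrow> tab set \<Rightarrow> nat \<Rightarrow> nat option" where
  "H_psiA \<psi> A n = (let S = {psi_d \<psi> T | T. T \<in> A \<and> psi_a \<psi> T \<le> n} in
       if finite S then Some (Max S) else None)"

end

theory Submission
  imports Defs
begin

definition pnode :: "nat \<Rightarrow> nat \<times> nat \<Rightarrow> bool" where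
  "pnode t w \<longleftrightarrow> fst w < t \<and> snd w \<le> fst w"

definition mpath :: "nat \<Rightarrow> (nat \<Rightarrow> nat) \<Rightarrow> bool" where
  "mpath t c \<longleftrightarrow> c 0 = 0 \<and> (\<forall>r. Suc r < t \<longrightarrow> c (Suc r) = c r \<or> c (Suc r) = Suc (c r))"

definition incone :: "nat \<Rightarrow> nat \<times> nat \<Rightarrow> nat \<times> nat \<Rightarrow> bool" where
  "incone t v w \<longleftrightarrow> fst v \<le> fst w \<and> fst w < t \<and> snd v \<le> snd w \<and> snd w \<le> snd v + (fst w - fst v)"

definition sinkcl :: "((nat \<times> nat) \<times> bool) list" where
  "sinkcl = [((0,0), False)]"

definition ncl :: "nat \<Rightarrow> nat \<times> nat \<Rightarrow> ((nat \<times> nat) \<times> bool) list" where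
  "ncl t w = (if Suc (fst w) = t then [(w,True)]
     else [(w,True), ((Suc (fst w), snd w), False), ((Suc (fst w), Suc (snd w)), False)])"

definition litok :: "(nat \<times> nat \<Rightarrow> bool option) \<Rightarrow> (nat \<times> nat) \<times> bool \<Rightarrow> bool" where
  "litok \<sigma> l \<longleftrightarrow> \<sigma> (fst l) \<noteq> Some (\<not> snd l)"

definition nofals :: "nat \<Rightarrow> (nat \<times> nat \<Rightarrow> bool option) \<Rightarrow> bool" where
  "nofals t \<sigma> \<longleftrightarrow> (\<exists>l\<in>set sinkcl. litok \<sigma> l) \<and> (\<forall>w. pnode t w \<longrightarrow> (\<exists>l\<in>set (ncl t w). litok \<sigma> l))"

fun PG :: "nat \<Rightarrow> nat \<Rightarrow> (nat \<times> nat \<Rightarrow> bool option) \<Rightarrow> bool" where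
  "PG t 0 \<sigma> = nofals t \<sigma>"
| "PG t (Suc j) \<sigma> = (nofals t \<sigma> \<and> (\<forall>u. pnode t u \<longrightarrow> \<sigma> u = None \<longrightarrow> (\<exists>b. PG t j (\<sigma>(u := Some b)))))"

definition pinv :: "nat \<Rightarrow> (nat \<times> nat \<Rightarrow> bool option) \<Rightarrow> (nat \<Rightarrow> nat) \<Rightarrow> nat \<Rightarrow> bool" where
  "pinv t \<sigma> c l \<longleftrightarrow> mpath t c \<and> l < t \<and> (\<forall>r\<le>l. \<sigma> (r, c r) \<noteq> Some True)
     \<and> (\<forall>r. l < r \<longrightarrow> r < t \<longrightarrow> \<sigma> (r, c r) = None)
     \<and> (\<forall>w. \<sigma> w = Some False \<longrightarrow> (\<exists>r\<le>l. w = (r, c r)))"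

definition qc :: "nat \<Rightarrow> (nat \<times> nat \<Rightarrow> bool option) \<Rightarrow> nat \<times> nat \<Rightarrow> nat" where
  "qc t \<sigma> v = card {w. incone t v w \<and> w \<noteq> v \<and> \<sigma> w \<noteq> None}"

lemma PG_mono: "PG t (Suc j) \<sigma> \<Longrightarrow> PG t j \<sigma>"
proof (induction j arbitrary: \<sigma>)
  case 0 then show ?case by simp
next
  case (Suc j) then show ?case by (metis PG.simps(2))
qed

lemma mpath_bounds:
  assumes "mpath t c" "r \<le> r'" "r' < t"
  shows "c r \<le> c r' \<and> c r' \<le> c r + (r' - r)"
  using assms(2,3)
proof (induction r')
  case 0 then show ?case by simp
next
  case (Suc r')
  show ?case
  proof (cases "r = Suc r'")
    case True then show ?thesis by simp
  next
    case False
    then have "r \<le> r'" using Suc by simp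
    with Suc have IH: "c r \<le> c r' \<and> c r' \<le> c r + (r' - r)" by simp
    from assms(1) Suc(3) have "c (Suc r') = c r' \<or> c (Suc r') = Suc (c r')" unfolding mpath_def by simp
    with IH \<open>r \<le> r'\<close> show ?thesis by auto
  qed
qed

lemma mpath_node: "mpath t c \<Longrightarrow> r < t \<Longrightarrow> pnode t (r, c r)"
  using mpath_bounds[of t c 0 r] unfolding pnode_def mpath_def by auto

lemma finite_cone: "finite {w. incone t v w \<and> P w}"
proof -
  have "{w. incone t v w \<and> P w} \<subseteq> {..<t} \<times> {..snd v + t}"
    unfolding incone_def by auto
  then show ?thesis by (rule finite_subset) auto
qed

lemma pinv_nofals:
  assumes "pinv t \<sigma> c l" "l < t - 1"
  shows "nofals t \<sigma>"
proof -
  from assms have mp: "mpath t c" and S1: "\<forall>r\<le>l. \<sigma> (r, c r) \<noteq> Some True"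
    and S2: "\<forall>r. l < r \<longrightarrow> r < t \<longrightarrow> \<sigma> (r, c r) = None"
    and S3: "\<forall>w. \<sigma> w = Some False \<longrightarrow> (\<exists>r\<le>l. w = (r, c r))" and lt: "l < t"
    unfolding pinv_def by auto
  define \<beta> where "\<beta> w = (\<not> (\<exists>r<t. w = (r, c r)))" for w
  have key: "litok \<sigma> (w, b)" if bw: "\<beta> w = b" for w b
  proof (cases b)
    case True
    then have nb: "\<not> (\<exists>r<t. w = (r, c r))" using bw True unfolding \<beta>_def by simp
    have "\<sigma> w \<noteq> Some False"
    proof
      assume "\<sigma> w = Some False"
      then obtain r where "r \<le> l" "w = (r, c r)" using S3 by blast
      with nb lt show False by auto
    qed
    then show ?thesis using True unfolding litok_def by simp
  next
    case False
    then obtain r where r: "r < t" "w = (r, c r)" using bw False unfolding \<beta>_def by auto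
    have "\<sigma> w \<noteq> Some True"
    proof (cases "r \<le> l")
      case True then show ?thesis using S1 r by simp
    next
      case False then show ?thesis using S2 r by simp
    qed
    then show ?thesis using False unfolding litok_def by simp
  qed
  have t1: "\<exists>l\<in>set sinkcl. litok \<sigma> l"
  proof -
    have "\<beta> (0,0) = False" unfolding \<beta>_def using mp lt unfolding mpath_def by auto
    then have "litok \<sigma> ((0,0), False)" using key by metis
    then show ?thesis unfolding sinkcl_def by auto
  qed
  have t2: "\<exists>l'\<in>set (ncl t w). litok \<sigma> l'" if nw: "pnode t w" for w
  proof -
    obtain r s where w: "w = (r,s)" by (cases w)
    show ?thesis
    proof (cases "Suc r = t")
      case True
      then have ncl: "ncl t w = [(w, True)]" unfolding ncl_def w by simp
      show ?thesis
      proof (cases "s = c r")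
        case True
        have "\<sigma> w = None" using S2 \<open>Suc r = t\<close> assms(2) w True by auto
        then show ?thesis unfolding ncl litok_def by simp
      next
        case False
        then have "\<beta> w = True" unfolding \<beta>_def w by auto
        then have "litok \<sigma> (w, True)" using key by metis
        then show ?thesis using ncl by auto
      qed
    next
      case False
      then have rt: "Suc r < t" using nw w unfolding pnode_def by simp
      have ncl: "ncl t w = [(w,True), ((Suc r, s), False), ((Suc r, Suc s), False)]"
        unfolding ncl_def w using False by simp
      show ?thesis
      proof (cases "\<beta> w")
        case True
        then have "litok \<sigma> (w, True)" using key by metis
        then show ?thesis using ncl by auto
      next
        case False
        then obtain r' where "r' < t" "w = (r', c r')" unfolding \<beta>_def by auto
        then have s: "s = c r" using w by simp
        from mp rt have "c (Suc r) = c r \<or> c (Suc r) = Suc (c r)" unfolding mpath_def by simp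
        then have "\<beta> (Suc r, s) = False \<or> \<beta> (Suc r, Suc s) = False"
          unfolding \<beta>_def using s rt by auto
        then have "litok \<sigma> ((Suc r, s), False) \<or> litok \<sigma> ((Suc r, Suc s), False)" using key by metis
        then show ?thesis using ncl by auto
      qed
    qed
  qed
  show ?thesis unfolding nofals_def using t1 t2 by blast
qed

lemma incone_trans: "incone t a b \<Longrightarrow> incone t b d \<Longrightarrow> incone t a d"
  unfolding incone_def by auto

lemma cut:
  assumes mp: "mpath t c" and ru: "ru < t"
  shows "l \<le> ru \<Longrightarrow> (\<forall>r. l < r \<longrightarrow> r < t \<longrightarrow> \<sigma> (r, c r) = None)
    \<Longrightarrow> (\<forall>c'. mpath t c' \<longrightarrow> (\<forall>r\<le>l. c' r = c r) \<longrightarrow> (\<forall>r. l < r \<longrightarrow> r < t \<longrightarrow> \<sigma> (r, c' r) = None) \<longrightarrow> c' ru = c ru)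
    \<Longrightarrow> ru - l \<le> card {w. incone t (l, c l) w \<and> w \<noteq> (l, c l) \<and> \<not> incone t (ru, c ru) w \<and> \<sigma> w \<noteq> None}"
proof (induction "ru - l" arbitrary: l)
  case 0 then show ?case by simp
next
  case (Suc d l)
  have lt: "l < ru" using Suc.hyps(2) by simp
  have lt1: "Suc l < t" using lt ru by simp
  define w1 where "w1 = (Suc l, c (Suc l))"
  have step: "c (Suc l) = c l \<or> c (Suc l) = Suc (c l)" using mp lt1 unfolding mpath_def by simp
  have bru: "c (Suc l) \<le> c ru \<and> c ru \<le> c (Suc l) + (ru - Suc l)"
    using mpath_bounds[OF mp, of "Suc l" ru] lt ru by simp
  obtain x where x: "\<sigma> x \<noteq> None" "incone t (l, c l) x" "x \<noteq> (l, c l)" "\<not> incone t w1 x"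
  proof -
    define c'' where "c'' r = (if r \<le> l then c r else if c (Suc l) = c l then c l + (r - l) else c l)" for r
    have mp'': "mpath t c''"
      unfolding mpath_def
    proof (intro conjI allI impI)
      show "c'' 0 = 0" using mp unfolding c''_def mpath_def by simp
    next
      fix r assume "Suc r < t"
      then show "c'' (Suc r) = c'' r \<or> c'' (Suc r) = Suc (c'' r)"
        using mp step unfolding c''_def mpath_def
        by (cases "Suc r \<le> l"; cases "r = l") auto
    qed
    have agree: "\<forall>r\<le>l. c'' r = c r" unfolding c''_def by simp
    have ne: "c'' ru \<noteq> c ru"
      using step bru lt unfolding c''_def by auto
    then obtain r where r: "l < r" "r < t" "\<sigma> (r, c'' r) \<noteq> None"
      using Suc.prems(3) mp'' agree by blast
    show ?thesis
    proof (rule that[of "(r, c'' r)"])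
      show "\<sigma> (r, c'' r) \<noteq> None" by (rule r(3))
      show "incone t (l, c l) (r, c'' r)" using r step unfolding incone_def c''_def by auto
      show "(r, c'' r) \<noteq> (l, c l)" using r by simp
      show "\<not> incone t w1 (r, c'' r)" using r step unfolding incone_def c''_def w1_def by auto
    qed
  qed
  have w1n: "\<sigma> w1 = None" using Suc.prems(2) lt1 unfolding w1_def by simp
  have IH: "ru - Suc l \<le> card {w. incone t (Suc l, c (Suc l)) w \<and> w \<noteq> (Suc l, c (Suc l)) \<and> \<not> incone t (ru, c ru) w \<and> \<sigma> w \<noteq> None}"
  proof (rule Suc.hyps(1))
    show "d = ru - Suc l" using Suc.hyps(2) by simp
    show "Suc l \<le> ru" using lt by simp
    show "\<forall>r. Suc l < r \<longrightarrow> r < t \<longrightarrow> \<sigma> (r, c r) = None" using Suc.prems(2) by simp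
    show "\<forall>c'. mpath t c' \<longrightarrow> (\<forall>r\<le>Suc l. c' r = c r) \<longrightarrow> (\<forall>r. Suc l < r \<longrightarrow> r < t \<longrightarrow> \<sigma> (r, c' r) = None) \<longrightarrow> c' ru = c ru"
    proof (intro allI impI)
      fix c' assume a: "mpath t c'" "\<forall>r\<le>Suc l. c' r = c r" "\<forall>r. Suc l < r \<longrightarrow> r < t \<longrightarrow> \<sigma> (r, c' r) = None"
      have "\<forall>r. l < r \<longrightarrow> r < t \<longrightarrow> \<sigma> (r, c' r) = None"
      proof (intro allI impI)
        fix r assume "l < r" "r < t"
        then show "\<sigma> (r, c' r) = None"
          using a(2,3) w1n unfolding w1_def by (cases "r = Suc l") auto
      qed
      then show "c' ru = c ru" using Suc.prems(3) a by simp
    qed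
  qed
  define S0 where "S0 = {w. incone t (l, c l) w \<and> w \<noteq> (l, c l) \<and> \<not> incone t (ru, c ru) w \<and> \<sigma> w \<noteq> None}"
  define S1 where "S1 = {w. incone t (Suc l, c (Suc l)) w \<and> w \<noteq> (Suc l, c (Suc l)) \<and> \<not> incone t (ru, c ru) w \<and> \<sigma> w \<noteq> None}"
  have vw1: "incone t (l, c l) w1" using step lt1 unfolding incone_def w1_def by auto
  have "insert x S1 \<subseteq> S0"
  proof
    fix w assume "w \<in> insert x S1"
    then show "w \<in> S0"
    proof
      assume "w = x"
      have "\<not> incone t (ru, c ru) x"
      proof
        assume "incone t (ru, c ru) x"
        moreover have "incone t w1 (ru, c ru)" using bru lt ru unfolding incone_def w1_def by auto
        ultimately show False using x(4) incone_trans by blast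
      qed
      then show ?thesis using x \<open>w = x\<close> unfolding S0_def by simp
    next
      assume "w \<in> S1"
      then have a: "incone t w1 w" "\<not> incone t (ru,c ru) w" "\<sigma> w \<noteq> None" unfolding S1_def w1_def by auto
      have "incone t (l, c l) w" using incone_trans[OF vw1 a(1)] .
      moreover have "w \<noteq> (l, c l)" using a(1) unfolding incone_def w1_def by auto
      ultimately show ?thesis using a unfolding S0_def by simp
    qed
  qed
  moreover have "x \<notin> S1" using x(4) unfolding S1_def w1_def by simp
  moreover have "finite S0" unfolding S0_def by (rule finite_cone)
  ultimately have "card (insert x S1) \<le> card S0" "card (insert x S1) = Suc (card S1)"
    by (auto intro: card_mono finite_subset) (meson card_insert_disjoint finite_subset)
  then show ?case using IH Suc.hyps(2) unfolding S0_def S1_def by linarith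
qed


lemma pg_claim:
  "pinv t \<sigma> c l \<Longrightarrow> l < t - 1 \<Longrightarrow> l + qc t \<sigma> (l, c l) + j \<le> t - 1 \<Longrightarrow> PG t j \<sigma>"
proof (induction j arbitrary: \<sigma> c l)
  case 0 then show ?case using pinv_nofals by simp
next
  case (Suc j \<sigma> c l)
  from Suc.prems(1) have mp: "mpath t c" and lt: "l < t" and S1: "\<forall>r\<le>l. \<sigma> (r, c r) \<noteq> Some True"
    and S2: "\<forall>r. l < r \<longrightarrow> r < t \<longrightarrow> \<sigma> (r, c r) = None"
    and S3: "\<forall>w. \<sigma> w = Some False \<longrightarrow> (\<exists>r\<le>l. w = (r, c r))"
    unfolding pinv_def by auto
  have nf: "nofals t \<sigma>" using pinv_nofals Suc.prems by blast
  have "\<exists>b. PG t j (\<sigma>(u := Some b))" if u: "pnode t u" "\<sigma> u = None" for u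
  proof (cases "\<exists>r\<le>l. u = (r, c r)")
    case True
    then obtain r where r: "r \<le> l" "u = (r, c r)" by blast
    define \<sigma>' where "\<sigma>' = \<sigma>(u := Some False)"
    have "pinv t \<sigma>' c l" unfolding pinv_def \<sigma>'_def
      using mp lt S1 S2 S3 r by auto
    moreover have "qc t \<sigma>' (l, c l) = qc t \<sigma> (l, c l)"
    proof -
      have "u \<notin> {w. incone t (l, c l) w \<and> w \<noteq> (l, c l)}"
        using r unfolding incone_def by auto
      then have "{w. incone t (l, c l) w \<and> w \<noteq> (l, c l) \<and> \<sigma>' w \<noteq> None} =
                 {w. incone t (l, c l) w \<and> w \<noteq> (l, c l) \<and> \<sigma> w \<noteq> None}"
        unfolding \<sigma>'_def by auto
      then show ?thesis unfolding qc_def by simp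
    qed
    ultimately have "PG t j \<sigma>'" using Suc.IH Suc.prems by simp
    then show ?thesis unfolding \<sigma>'_def by blast
  next
    case nota: False
    show ?thesis
    proof (cases "\<exists>c'. mpath t c' \<and> (\<forall>r\<le>l. c' r = c r) \<and> (\<forall>r. l < r \<longrightarrow> r < t \<longrightarrow> (r, c' r) \<noteq> u \<and> \<sigma> (r, c' r) = None)")
      case True
      then obtain c' where c': "mpath t c'" "\<forall>r\<le>l. c' r = c r"
        "\<forall>r. l < r \<longrightarrow> r < t \<longrightarrow> (r, c' r) \<noteq> u \<and> \<sigma> (r, c' r) = None" by blast
      define \<sigma>' where "\<sigma>' = \<sigma>(u := Some True)"
      have "pinv t \<sigma>' c' l" unfolding pinv_def
      proof (intro conjI allI impI)
        show "mpath t c'" by (rule c'(1))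
        show "l < t" by (rule lt)
        fix r assume "r \<le> l"
        then show "\<sigma>' (r, c' r) \<noteq> Some True" using S1 c'(2) nota unfolding \<sigma>'_def by auto
      next
        fix r assume "l < r" "r < t"
        then show "\<sigma>' (r, c' r) = None" using c'(3) unfolding \<sigma>'_def by auto
      next
        fix w assume "\<sigma>' w = Some False"
        then have "\<sigma> w = Some False" unfolding \<sigma>'_def by (cases "w = u") auto
        then show "\<exists>r\<le>l. w = (r, c' r)" using S3 c'(2) by fastforce
      qed
      moreover have "qc t \<sigma>' (l, c' l) \<le> Suc (qc t \<sigma> (l, c l))"
      proof -
        have "{w. incone t (l, c l) w \<and> w \<noteq> (l, c l) \<and> \<sigma>' w \<noteq> None} \<subseteq>
              insert u {w. incone t (l, c l) w \<and> w \<noteq> (l, c l) \<and> \<sigma> w \<noteq> None}"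
          unfolding \<sigma>'_def by auto
        then have "card {w. incone t (l, c l) w \<and> w \<noteq> (l, c l) \<and> \<sigma>' w \<noteq> None} \<le>
              card (insert u {w. incone t (l, c l) w \<and> w \<noteq> (l, c l) \<and> \<sigma> w \<noteq> None})"
          by (intro card_mono) (auto intro: finite_cone)
        also have "\<dots> \<le> Suc (card {w. incone t (l, c l) w \<and> w \<noteq> (l, c l) \<and> \<sigma> w \<noteq> None})"
          by (rule card_insert_le_m1) auto
        finally show ?thesis unfolding qc_def using c'(2) by simp
      qed
      ultimately have "PG t j \<sigma>'" using Suc.IH[of \<sigma>' c' l] Suc.prems by simp
      then show ?thesis unfolding \<sigma>'_def by blast
    next
      case notb: False
      have "\<exists>r. l < r \<and> r < t \<and> (r, c r) = u"
        using notb mp S2 by blast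
      then obtain ru where ru: "l < ru" "ru < t" "u = (ru, c ru)" by auto
      define \<sigma>' where "\<sigma>' = \<sigma>(u := Some False)"
      have pi: "pinv t \<sigma>' c ru" unfolding pinv_def
      proof (intro conjI allI impI)
        show "mpath t c" by (rule mp)
        show "ru < t" by (rule ru(2))
        fix r assume "r \<le> ru"
        then show "\<sigma>' (r, c r) \<noteq> Some True" using S1 S2 ru unfolding \<sigma>'_def
          by (cases "r \<le> l") auto
      next
        fix r assume "ru < r" "r < t"
        then show "\<sigma>' (r, c r) = None" using S2 ru unfolding \<sigma>'_def by auto
      next
        fix w assume "\<sigma>' w = Some False"
        show "\<exists>r\<le>ru. w = (r, c r)"
        proof (cases "w = u")
          case True then show ?thesis using ru by auto
        next
          case False
          then have "\<sigma> w = Some False" using \<open>\<sigma>' w = Some False\<close> unfolding \<sigma>'_def by simp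
          then obtain r where "r \<le> l" "w = (r, c r)" using S3 by blast
          then show ?thesis using ru by (intro exI[of _ r]) auto
        qed
      qed
      have cutb: "ru - l \<le> card {w. incone t (l, c l) w \<and> w \<noteq> (l, c l) \<and> \<not> incone t (ru, c ru) w \<and> \<sigma> w \<noteq> None}"
      proof (rule cut[OF mp ru(2)])
        show "l \<le> ru" using ru by simp
        show "\<forall>r. l < r \<longrightarrow> r < t \<longrightarrow> \<sigma> (r, c r) = None" by (rule S2)
        show "\<forall>c'. mpath t c' \<longrightarrow> (\<forall>r\<le>l. c' r = c r) \<longrightarrow> (\<forall>r. l < r \<longrightarrow> r < t \<longrightarrow> \<sigma> (r, c' r) = None) \<longrightarrow> c' ru = c ru"
        proof (intro allI impI)
          fix c' assume a: "mpath t c'" "\<forall>r\<le>l. c' r = c r" "\<forall>r. l < r \<longrightarrow> r < t \<longrightarrow> \<sigma> (r, c' r) = None"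
          then obtain r where "l < r" "r < t" "(r, c' r) = u" using notb by blast
          then show "c' ru = c ru" using ru by auto
        qed
      qed
      define Sc where "Sc = {w. incone t (l, c l) w \<and> w \<noteq> (l, c l) \<and> \<not> incone t (ru, c ru) w \<and> \<sigma> w \<noteq> None}"
      define Su where "Su = {w. incone t (ru, c ru) w \<and> w \<noteq> (ru, c ru) \<and> \<sigma>' w \<noteq> None}"
      define S0 where "S0 = {w. incone t (l, c l) w \<and> w \<noteq> (l, c l) \<and> \<sigma> w \<noteq> None}"
      have vu: "incone t (l, c l) (ru, c ru)" using mpath_bounds[OF mp, of l ru] ru unfolding incone_def by auto
      have sub: "Sc \<union> Su \<subseteq> S0"
      proof
        fix w assume "w \<in> Sc \<union> Su"
        then show "w \<in> S0"
        proof
          assume "w \<in> Sc" then show ?thesis unfolding Sc_def S0_def by auto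
        next
          assume "w \<in> Su"
          then have a: "incone t (ru, c ru) w" "w \<noteq> (ru, c ru)" "\<sigma>' w \<noteq> None" unfolding Su_def by auto
          have "\<sigma> w \<noteq> None" using a ru unfolding \<sigma>'_def by auto
          moreover have "incone t (l, c l) w" using incone_trans[OF vu a(1)] .
          moreover have "w \<noteq> (l, c l)" using a(1) ru unfolding incone_def by auto
          ultimately show ?thesis unfolding S0_def by simp
        qed
      qed
      have disj: "Sc \<inter> Su = {}" unfolding Sc_def Su_def by auto
      have fin: "finite S0" unfolding S0_def by (rule finite_cone)
      have "card Sc + card Su \<le> card S0"
        using card_Un_disjoint[of Sc Su] disj card_mono[OF fin sub] fin sub
        by (metis finite_Un finite_subset)
      then have "ru - l + qc t \<sigma>' (ru, c ru) \<le> qc t \<sigma> (l, c l)"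
        using cutb unfolding qc_def Sc_def Su_def S0_def by linarith
      then have "ru + qc t \<sigma>' (ru, c ru) + j \<le> t - 1" and "ru < t - 1"
        using Suc.prems(3) ru by linarith+
      then have "PG t j \<sigma>'" using Suc.IH[of \<sigma>' c ru] pi by simp
      then show ?thesis unfolding \<sigma>'_def by blast
    qed
  qed
  then show ?case using nf by simp
qed

lemma pg_start: "2 \<le> t \<Longrightarrow> PG t (t - 1) (\<lambda>_. None)"
proof -
  assume t: "2 \<le> t"
  have "pinv t (\<lambda>_. None) (\<lambda>_. 0) 0" unfolding pinv_def mpath_def using t by auto
  moreover have "qc t (\<lambda>_. None) (0, 0) = 0" unfolding qc_def by simp
  ultimately show ?thesis using pg_claim[of t "\<lambda>_. None" "\<lambda>_. 0" 0 "t - 1"] t by simp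
qed



definition consr :: "tab \<Rightarrow> (nat \<Rightarrow> bool option) \<Rightarrow> bool list \<times> nat set \<Rightarrow> bool" where
  "consr T \<rho> r \<longleftrightarrow> (\<forall>f b. \<rho> f = Some b \<longrightarrow> rval T r f = b)"

definition consw :: "tab \<Rightarrow> (nat \<times> bool) list \<Rightarrow> bool list \<times> nat set \<Rightarrow> bool" where
  "consw T w r \<longleftrightarrow> (\<forall>p\<in>set w. rval T r (fst p) = snd p)"

definition valid :: "tab \<Rightarrow> (nat \<Rightarrow> bool option) \<Rightarrow> bool" where
  "valid T \<rho> \<longleftrightarrow> (\<forall>d. \<exists>r\<in>set (rows T). consr T \<rho> r \<and> d \<notin> snd r)"

fun G :: "tab \<Rightarrow> nat \<Rightarrow> (nat \<Rightarrow> bool option) \<Rightarrow> bool" where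
  "G T 0 \<rho> = valid T \<rho>"
| "G T (Suc j) \<rho> = (valid T \<rho> \<and> (\<forall>f\<in>At T. \<rho> f = None \<longrightarrow> (\<exists>b. G T j (\<rho>(f \<mapsto> b)))))"

lemma G_valid: "G T j \<rho> \<Longrightarrow> valid T \<rho>"
  by (cases j) auto

lemma np_Node: "p \<in> set (node_paths (Node f cs)) \<longleftrightarrow>
   (\<exists>bc\<in>set cs. \<exists>q\<in>set (node_paths (snd bc)). p = ((f, fst bc) # fst q, snd q))"
  by auto

lemma adv:
  "det_node Nd \<Longrightarrow> node_atts Nd \<subseteq> At T \<Longrightarrow> G T j \<rho>
   \<Longrightarrow> (\<forall>r\<in>set (rows T). consr T \<rho> r \<longrightarrow> (\<exists>p\<in>set (node_paths Nd). consw T (fst p) r))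
   \<Longrightarrow> (\<forall>p\<in>set (node_paths Nd). \<forall>r\<in>set (rows T). consr T \<rho> r \<longrightarrow> consw T (fst p) r \<longrightarrow> snd p \<in> snd r)
   \<Longrightarrow> \<exists>p\<in>set (node_paths Nd). j < length (fst p)"
proof (induction Nd arbitrary: j \<rho>)
  case (Leaf d)
  from G_valid[OF Leaf.prems(3)] obtain r where "r \<in> set (rows T)" "consr T \<rho> r" "d \<notin> snd r"
    unfolding valid_def by blast
  with Leaf.prems(5) show ?case by (simp add: consw_def)
next
  case (Node f cs j \<rho>)
  have val: "valid T \<rho>" using G_valid[OF Node.prems(3)] .
  have fA: "f \<in> At T" using Node.prems(2) by simp
  have dist: "distinct (map fst cs)" and detc: "\<forall>p\<in>set cs. det_node (snd p)" using Node.prems(1) by auto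
  show ?case
  proof (cases "j = 0 \<and> \<rho> f = None")
    case True
    from val obtain r where r: "r \<in> set (rows T)" "consr T \<rho> r" unfolding valid_def by blast
    then obtain p where "p \<in> set (node_paths (Node f cs))" using Node.prems(4) by blast
    then show ?thesis using True by (auto simp: np_Node)
  next
    case False
    obtain b \<rho>' j' where bj: "\<rho>' f = Some b" "G T j' \<rho>'" "\<forall>r. consr T \<rho>' r \<longrightarrow> consr T \<rho> r" "j \<le> Suc j'"
    proof (cases "\<rho> f")
      case None
      with False obtain j'' where j: "j = Suc j''" by (cases j) auto
      with Node.prems(3) fA None obtain b where "G T j'' (\<rho>(f \<mapsto> b))" by auto
      moreover have "\<forall>r. consr T (\<rho>(f \<mapsto> b)) r \<longrightarrow> consr T \<rho> r"
        unfolding consr_def using None by (metis fun_upd_other option.simps(3))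
      ultimately show ?thesis using that[of "\<rho>(f \<mapsto> b)" b j''] j by simp
    next
      case (Some b)
      then show ?thesis using that[of \<rho> b j] Node.prems(3) by simp
    qed
    from G_valid[OF bj(2)] obtain r0 where r0: "r0 \<in> set (rows T)" "consr T \<rho>' r0"
      unfolding valid_def by blast
    have rvb: "rval T r f = b" if "consr T \<rho>' r" for r using that bj(1) unfolding consr_def by simp
    obtain p0 where "p0 \<in> set (node_paths (Node f cs))" "consw T (fst p0) r0"
      using Node.prems(4) r0 bj(3) by blast
    then obtain bc q where bcq: "bc \<in> set cs" "q \<in> set (node_paths (snd bc))"
          "p0 = ((f, fst bc) # fst q, snd q)" unfolding np_Node by blast
    have "fst bc = b" using \<open>consw T (fst p0) r0\<close> bcq(3) rvb[OF r0(2)] unfolding consw_def by simp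
    then obtain c where c: "(b, c) \<in> set cs" using bcq(1) by (cases bc) auto
    have uniq: "c' = c" if "(b, c') \<in> set cs" for c'
      using eq_key_imp_eq_value[OF dist that c] .
    have "\<exists>p\<in>set (node_paths c). j' < length (fst p)"
    proof (rule Node.IH)
      show "(b, c) \<in> set cs" by (rule c)
      show "c \<in> Basic_BNFs.snds (b, c)" by (simp add: Basic_BNFs.prod_set_defs)
      show "det_node c" using detc c by auto
      show "node_atts c \<subseteq> At T" using Node.prems(2) c by force
      show "G T j' \<rho>'" by (rule bj(2))
      show "\<forall>r\<in>set (rows T). consr T \<rho>' r \<longrightarrow> (\<exists>p\<in>set (node_paths c). consw T (fst p) r)"
      proof (intro ballI impI)
        fix r assume r: "r \<in> set (rows T)" "consr T \<rho>' r"
        then obtain p where "p \<in> set (node_paths (Node f cs))" "consw T (fst p) r"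
          using Node.prems(4) bj(3) by blast
        then obtain bc q where bc: "bc \<in> set cs" "q \<in> set (node_paths (snd bc))"
          "p = ((f, fst bc) # fst q, snd q)" unfolding np_Node by blast
        have "fst bc = b" using \<open>consw T (fst p) r\<close> bc(3) rvb[OF r(2)] unfolding consw_def by simp
        then have "snd bc = c" using uniq bc(1) by (cases bc) auto
        then show "\<exists>p\<in>set (node_paths c). consw T (fst p) r"
          using bc \<open>consw T (fst p) r\<close> unfolding consw_def by auto
      qed
      show "\<forall>p\<in>set (node_paths c). \<forall>r\<in>set (rows T). consr T \<rho>' r \<longrightarrow> consw T (fst p) r \<longrightarrow> snd p \<in> snd r"
      proof (intro ballI impI)
        fix p r assume a: "p \<in> set (node_paths c)" "r \<in> set (rows T)" "consr T \<rho>' r" "consw T (fst p) r"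
        have "((f, b) # fst p, snd p) \<in> set (node_paths (Node f cs))"
          unfolding np_Node
        proof (rule bexI[OF _ c])
          show "\<exists>q\<in>set (node_paths (snd (b, c))). ((f, b) # fst p, snd p) = ((f, fst (b, c)) # fst q, snd q)"
            using a(1) by auto
        qed
        moreover have "consw T ((f, b) # fst p) r" using a(4) rvb[OF a(3)] unfolding consw_def by simp
        moreover have "consr T \<rho> r" using bj(3) a(3) by blast
        ultimately show "snd p \<in> snd r" using Node.prems(5) a(2) by (metis fst_conv snd_conv)
      qed
    qed
    then obtain p where p: "p \<in> set (node_paths c)" "j' < length (fst p)" by blast
    have mem: "((f, b) # fst p, snd p) \<in> set (node_paths (Node f cs))"
      unfolding np_Node
    proof (rule bexI[OF _ c])
      show "\<exists>q\<in>set (node_paths (snd (b, c))). ((f, b) # fst p, snd p) = ((f, fst (b, c)) # fst q, snd q)"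
        using p(1) by auto
    qed
    have "j < length (fst ((f, b) # fst p, snd p))" using p(2) bj(4) by simp
    then show ?thesis using mem by blast
  qed
qed

lemma det_lower:
  assumes "det_tree_for \<Gamma> T" "G T j Map.empty"
  shows "\<exists>p\<in>set (tree_paths \<Gamma>). j < length (fst p)"
proof -
  from assms(1) have l1: "length \<Gamma> = 1" and dn: "\<forall>v\<in>set \<Gamma>. det_node v" unfolding det_tree_for_def by auto
  from l1 obtain Nd where \<Gamma>: "\<Gamma> = [Nd]" by (cases \<Gamma>) auto
  with dn have det: "det_node Nd" by simp
  have tp: "tree_paths \<Gamma> = node_paths Nd" unfolding tree_paths_def \<Gamma> by simp
  have nd: "nondet_tree_for \<Gamma> T" using assms(1) unfolding det_tree_for_def by simp
  have sr: "r \<in> set (sub_rows T w) \<longleftrightarrow> r \<in> set (rows T) \<and> consw T w r" for r w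
    unfolding sub_rows_def consw_def by auto
  have cov: "\<forall>r\<in>set (rows T). \<exists>\<tau>\<in>set (tree_paths \<Gamma>). r \<in> set (sub_rows T (fst \<tau>))"
    and cor: "\<forall>\<tau>\<in>set (tree_paths \<Gamma>). sub_rows T (fst \<tau>) = [] \<or> snd \<tau> \<in> Pi_rows (sub_rows T (fst \<tau>))"
    and ats: "tree_atts \<Gamma> \<subseteq> At T"
    using nd unfolding nondet_tree_for_def by auto
  have "\<exists>p\<in>set (node_paths Nd). j < length (fst p)"
  proof (rule adv[OF det _ assms(2)])
    show "node_atts Nd \<subseteq> At T" using ats unfolding tree_atts_def \<Gamma> by simp
    show "\<forall>r\<in>set (rows T). consr T Map.empty r \<longrightarrow> (\<exists>p\<in>set (node_paths Nd). consw T (fst p) r)"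
    proof (intro ballI impI)
      fix r assume r: "r \<in> set (rows T)"
      then obtain \<tau> where "\<tau> \<in> set (tree_paths \<Gamma>)" "r \<in> set (sub_rows T (fst \<tau>))" using cov by blast
      then show "\<exists>p\<in>set (node_paths Nd). consw T (fst p) r" unfolding tp sr by blast
    qed
    show "\<forall>p\<in>set (node_paths Nd). \<forall>r\<in>set (rows T). consr T Map.empty r \<longrightarrow> consw T (fst p) r \<longrightarrow> snd p \<in> snd r"
    proof (intro ballI impI)
      fix p r assume a: "p \<in> set (node_paths Nd)" "r \<in> set (rows T)" "consw T (fst p) r"
      then have rin: "r \<in> set (sub_rows T (fst p))" using sr by simp
      have "sub_rows T (fst p) = [] \<or> snd p \<in> Pi_rows (sub_rows T (fst p))"
        using cor a(1) unfolding tp by blast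
      then have "snd p \<in> Pi_rows (sub_rows T (fst p))" using rin by auto
      then show "snd p \<in> snd r" using rin unfolding Pi_rows_def by blast
    qed
  qed
  then show ?thesis unfolding tp .
qed



definition pos :: "nat \<times> nat \<Rightarrow> nat" where
  "pos w = fst w * Suc (fst w) div 2 + snd w"

lemma tri_Suc: "Suc r * Suc (Suc r) div 2 = r * Suc r div 2 + Suc r"
proof -
  have "Suc r * Suc (Suc r) = r * Suc r + 2 * Suc r" by simp
  then show ?thesis by simp
qed

lemma tri_mono: "r \<le> r' \<Longrightarrow> r * Suc r div 2 \<le> r' * Suc r' div 2"
  by (intro div_le_mono mult_le_mono) auto

lemma pos_lt: "pnode t w \<Longrightarrow> pos w < t * Suc t div 2"
proof -
  assume "pnode t w"
  then have a: "fst w < t" "snd w \<le> fst w" unfolding pnode_def by auto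
  have "pos w < Suc (fst w) * Suc (Suc (fst w)) div 2" unfolding pos_def tri_Suc using a by simp
  also have "\<dots> \<le> t * Suc t div 2" using tri_mono[of "Suc (fst w)" t] a by simp
  finally show ?thesis .
qed

lemma pos_bounds: "pnode t w \<Longrightarrow> fst w * Suc (fst w) div 2 \<le> pos w \<and> pos w < Suc (fst w) * Suc (Suc (fst w)) div 2"
  unfolding pos_def pnode_def tri_Suc by auto

lemma pos_inj: "pnode t w \<Longrightarrow> pnode t w' \<Longrightarrow> pos w = pos w' \<Longrightarrow> w = w'"
proof -
  assume a: "pnode t w" "pnode t w'" "pos w = pos w'"
  have "\<not> fst w < fst w'" if "pnode t w" "pnode t w'" "pos w = pos w'" for w w'
  proof
    assume "fst w < fst w'"
    then have "Suc (fst w) * Suc (Suc (fst w)) div 2 \<le> fst w' * Suc (fst w') div 2"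
      using tri_mono[of "Suc (fst w)" "fst w'"] by simp
    then show False using pos_bounds[OF that(1)] pos_bounds[OF that(2)] that(3) by linarith
  qed
  from this[OF a] this[OF a(2,1) a(3)[symmetric]] have "fst w = fst w'" by simp
  with a(3) have "snd w = snd w'" unfolding pos_def by simp
  with \<open>fst w = fst w'\<close> show ?thesis by (simp add: prod_eq_iff)
qed

definition fals :: "((nat \<times> nat) \<times> bool) list \<Rightarrow> bool list \<Rightarrow> bool" where
  "fals C xs \<longleftrightarrow> (\<forall>l\<in>set C. xs ! pos (fst l) \<noteq> snd l)"

definition nu :: "nat \<Rightarrow> bool list \<Rightarrow> nat set" where
  "nu t xs = {d. (d = 0 \<and> fals sinkcl xs) \<or> (\<exists>w. pnode t w \<and> d = Suc (pos w) \<and> fals (ncl t w) xs)}"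

lemma nu_finite: "finite (nu t xs)"
proof -
  have "nu t xs \<subseteq> {..t * Suc t div 2}" unfolding nu_def using pos_lt by fastforce
  then show ?thesis by (rule finite_subset) simp
qed

lemma sink_node: "1 \<le> t \<Longrightarrow> l \<in> set sinkcl \<Longrightarrow> pnode t (fst l)"
  unfolding sinkcl_def pnode_def by auto

lemma ncl_node: "pnode t w \<Longrightarrow> l \<in> set (ncl t w) \<Longrightarrow> pnode t (fst l)"
  unfolding ncl_def pnode_def by (auto split: if_splits)

lemma ncl_len: "length (ncl t w) \<le> 3"
  unfolding ncl_def by simp

lemma fals_down: "r < t \<Longrightarrow> s \<le> r \<Longrightarrow> \<not> xs ! pos (r,s) \<Longrightarrow> \<exists>w. pnode t w \<and> fals (ncl t w) xs"
proof (induction "t - r" arbitrary: r s)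
  case 0 then show ?case by simp
next
  case (Suc d r s)
  show ?case
  proof (cases "Suc r = t")
    case True
    then have "fals (ncl t (r,s)) xs" unfolding ncl_def fals_def using Suc.prems by simp
    moreover have "pnode t (r,s)" unfolding pnode_def using Suc.prems by simp
    ultimately show ?thesis by blast
  next
    case False
    show ?thesis
    proof (cases "xs ! pos (Suc r, s) \<and> xs ! pos (Suc r, Suc s)")
      case True
      then have "fals (ncl t (r,s)) xs" unfolding ncl_def fals_def using Suc.prems False by simp
      moreover have "pnode t (r,s)" unfolding pnode_def using Suc.prems by simp
      ultimately show ?thesis by blast
    next
      case F2: False
      have "Suc r < t" using False Suc.prems by simp
      have "\<not> xs ! pos (Suc r, s) \<or> \<not> xs ! pos (Suc r, Suc s)" using F2 by simp
      then show ?thesis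
      proof
        assume "\<not> xs ! pos (Suc r, s)"
        then show ?thesis using Suc.hyps(1)[of "Suc r" s] Suc.hyps(2) \<open>Suc r < t\<close> Suc.prems by simp
      next
        assume "\<not> xs ! pos (Suc r, Suc s)"
        then show ?thesis using Suc.hyps(1)[of "Suc r" "Suc s"] Suc.hyps(2) \<open>Suc r < t\<close> Suc.prems by simp
      qed
    qed
  qed
qed

lemma nu_ne: "1 \<le> t \<Longrightarrow> nu t xs \<noteq> {}"
proof -
  assume t: "1 \<le> t"
  show ?thesis
  proof (cases "xs ! pos (0,0)")
    case True
    then have "0 \<in> nu t xs" unfolding nu_def fals_def sinkcl_def by simp
    then show ?thesis by blast
  next
    case False
    then obtain w where "pnode t w" "fals (ncl t w) xs" using fals_down[of 0 t 0 xs] t by auto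
    then have "Suc (pos w) \<in> nu t xs" unfolding nu_def by blast
    then show ?thesis by blast
  qed
qed

definition sig :: "nat list \<Rightarrow> nat \<Rightarrow> (nat \<Rightarrow> bool option) \<Rightarrow> nat \<times> nat \<Rightarrow> bool option" where
  "sig qa t \<rho> w = (if pnode t w then \<rho> (qa ! pos w) else None)"



locale ptab =
  fixes T' :: tab and qa :: "nat list" and k t :: nat
  assumes attrs: "attrs T' = qa" and dqa: "distinct qa" and lqa: "length qa = k"
    and rowsT: "set (rows T') = (\<lambda>xs. (xs, nu t xs)) ` {xs. length xs = k}"
    and tk: "t * Suc t div 2 \<le> k" and t1: "1 \<le> t"
begin

lemma AtT: "At T' = set qa" unfolding At_def attrs ..

lemma row_iff: "r \<in> set (rows T') \<longleftrightarrow> length (fst r) = k \<and> snd r = nu t (fst r)"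
  using rowsT by (cases r) auto

lemma rval_nth: "i < k \<Longrightarrow> length (fst r) = k \<Longrightarrow> rval T' r (qa ! i) = fst r ! i"
  unfolding rval_def attrs using map_of_zip_nth[of qa "fst r" i] dqa lqa by simp

lemma pos_k: "pnode t w \<Longrightarrow> pos w < k"
  using pos_lt[of t w] tk by simp

lemma qa_pos_eq: "pnode t w \<Longrightarrow> pnode t w' \<Longrightarrow> qa ! pos w = qa ! pos w' \<longleftrightarrow> w = w'"
proof -
  assume a: "pnode t w" "pnode t w'"
  have "qa ! pos w = qa ! pos w' \<longleftrightarrow> pos w = pos w'"
    using nth_eq_iff_index_eq[OF dqa] pos_k[OF a(1)] pos_k[OF a(2)] lqa by simp
  then show ?thesis using pos_inj[OF a] by auto
qed

lemma valid_lift: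
  assumes nf: "nofals t (sig qa t \<rho>)" and dom: "\<forall>f. \<rho> f \<noteq> None \<longrightarrow> f \<in> set qa"
  shows "valid T' \<rho>"
  unfolding valid_def
proof
  fix d
  let ?\<sigma> = "sig qa t \<rho>"
  have ex: "\<exists>l. pnode t (fst l) \<and> litok ?\<sigma> l \<and> (d = 0 \<longrightarrow> l \<in> set sinkcl) \<and>
    (\<forall>w. pnode t w \<longrightarrow> d = Suc (pos w) \<longrightarrow> l \<in> set (ncl t w))"
  proof (cases "\<exists>w. pnode t w \<and> d = Suc (pos w)")
    case True
    then obtain w where w: "pnode t w" "d = Suc (pos w)" by blast
    from nf w(1) obtain l where l: "l \<in> set (ncl t w)" "litok ?\<sigma> l" unfolding nofals_def by blast
    have uq: "\<forall>w'. pnode t w' \<longrightarrow> d = Suc (pos w') \<longrightarrow> w' = w" using w pos_inj by auto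
    have "pnode t (fst l)" using ncl_node[OF w(1) l(1)] .
    moreover have "d \<noteq> 0" using w by simp
    ultimately show ?thesis using l uq by blast
  next
    case False
    from nf obtain l where l: "l \<in> set sinkcl" "litok ?\<sigma> l" unfolding nofals_def by blast
    have "pnode t (fst l)" using sink_node[OF t1 l(1)] .
    then show ?thesis using l False by blast
  qed
  then obtain l where l: "pnode t (fst l)" "litok ?\<sigma> l" "d = 0 \<longrightarrow> l \<in> set sinkcl"
    "\<forall>w. pnode t w \<longrightarrow> d = Suc (pos w) \<longrightarrow> l \<in> set (ncl t w)" by blast
  define xs where "xs = map (\<lambda>i. if i = pos (fst l) then snd l else (case \<rho> (qa ! i) of Some b \<Rightarrow> b | None \<Rightarrow> False)) [0..<k]"
  have lxs: "length xs = k" unfolding xs_def by simp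
  have xsi: "xs ! i = (if i = pos (fst l) then snd l else (case \<rho> (qa ! i) of Some b \<Rightarrow> b | None \<Rightarrow> False))"
    if "i < k" for i unfolding xs_def using that by simp
  have xl: "xs ! pos (fst l) = snd l" using xsi pos_k[OF l(1)] by simp
  have row: "(xs, nu t xs) \<in> set (rows T')" using row_iff lxs by simp
  have cons: "consr T' \<rho> (xs, nu t xs)" unfolding consr_def
  proof (intro allI impI)
    fix f b assume fb: "\<rho> f = Some b"
    then have "f \<in> set qa" using dom by auto
    then obtain i where i: "i < k" "f = qa ! i" using lqa by (auto simp: in_set_conv_nth)
    have rv: "rval T' (xs, nu t xs) f = xs ! i" using rval_nth[OF i(1)] lxs i(2) by simp
    show "rval T' (xs, nu t xs) f = b"
    proof (cases "i = pos (fst l)")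
      case True
      then have "?\<sigma> (fst l) = Some b" unfolding sig_def using l(1) fb i(2) by simp
      then have "b = snd l" using l(2) unfolding litok_def by (cases b; cases "snd l") auto
      then show ?thesis using rv xl True by simp
    next
      case False
      then show ?thesis using rv fb i xsi by simp
    qed
  qed
  have "d \<notin> nu t xs"
  proof
    assume "d \<in> nu t xs"
    then consider "d = 0" "fals sinkcl xs" | w where "pnode t w" "d = Suc (pos w)" "fals (ncl t w) xs"
      unfolding nu_def by blast
    then show False
    proof cases
      case 1
      then have "l \<in> set sinkcl" using l(3) by simp
      then show False using 1(2) xl unfolding fals_def by blast
    next
      case 2
      then have "l \<in> set (ncl t w)" using l(4) by blast
      then show False using 2(3) xl unfolding fals_def by blast
    qed
  qed
  then show "\<exists>r\<in>set (rows T'). consr T' \<rho> r \<and> d \<notin> snd r" using row cons by auto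
qed

lemma G_lift: "PG t j (sig qa t \<rho>) \<Longrightarrow> (\<forall>f. \<rho> f \<noteq> None \<longrightarrow> f \<in> set qa) \<Longrightarrow> G T' j \<rho>"
proof (induction j arbitrary: \<rho>)
  case 0 then show ?case using valid_lift by simp
next
  case (Suc j \<rho>)
  have val: "valid T' \<rho>" using valid_lift Suc.prems by simp
  have "\<exists>b. G T' j (\<rho>(f \<mapsto> b))" if f: "f \<in> At T'" "\<rho> f = None" for f
  proof (cases "\<exists>u. pnode t u \<and> f = qa ! pos u")
    case True
    then obtain u where u: "pnode t u" "f = qa ! pos u" by blast
    have "sig qa t \<rho> u = None" unfolding sig_def using u f by simp
    moreover have "\<forall>u. pnode t u \<longrightarrow> sig qa t \<rho> u = None \<longrightarrow> (\<exists>b. PG t j ((sig qa t \<rho>)(u := Some b)))"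
      using Suc.prems(1) by (simp del: fun_upd_apply)
    ultimately obtain b where b: "PG t j ((sig qa t \<rho>)(u := Some b))" using u by blast
    have "sig qa t (\<rho>(f \<mapsto> b)) = (sig qa t \<rho>)(u := Some b)"
    proof
      fix w show "sig qa t (\<rho>(f \<mapsto> b)) w = ((sig qa t \<rho>)(u := Some b)) w"
        unfolding sig_def using qa_pos_eq[OF _ u(1), of w] u by auto
    qed
    then have "PG t j (sig qa t (\<rho>(f \<mapsto> b)))" using b by simp
    moreover have "\<forall>g. (\<rho>(f \<mapsto> b)) g \<noteq> None \<longrightarrow> g \<in> set qa" using Suc.prems(2) f AtT by auto
    ultimately show ?thesis using Suc.IH by blast
  next
    case False
    have "sig qa t (\<rho>(f \<mapsto> False)) = sig qa t \<rho>"
    proof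
      fix w show "sig qa t (\<rho>(f \<mapsto> False)) w = sig qa t \<rho> w"
      proof (cases "pnode t w")
        case True
        then have "qa ! pos w \<noteq> f" using False by blast
        then show ?thesis unfolding sig_def by simp
      next
        case False then show ?thesis unfolding sig_def by simp
      qed
    qed
    then have "PG t j (sig qa t (\<rho>(f \<mapsto> False)))" using PG_mono[OF Suc.prems(1)] by simp
    moreover have "\<forall>g. (\<rho>(f \<mapsto> False)) g \<noteq> None \<longrightarrow> g \<in> set qa" using Suc.prems(2) f AtT by auto
    ultimately show ?thesis using Suc.IH by blast
  qed
  then show ?case using val by simp
qed

lemma G_start: "2 \<le> t \<Longrightarrow> G T' (t - 1) Map.empty"
proof -
  assume "2 \<le> t"
  have "sig qa t Map.empty = (\<lambda>_. None)" unfolding sig_def by auto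
  then have "PG t (t - 1) (sig qa t Map.empty)" using pg_start[OF \<open>2 \<le> t\<close>] by simp
  then show ?thesis using G_lift[of "t - 1" Map.empty] by simp
qed

end



fun ft :: "(bool list \<Rightarrow> nat set) \<Rightarrow> nat list \<Rightarrow> bool list \<Rightarrow> dtree" where
  "ft \<nu> [] bs = Leaf (SOME d. d \<in> \<nu> (rev bs))"
| "ft \<nu> (f # fs) bs = Node f [(False, ft \<nu> fs (False # bs)), (True, ft \<nu> fs (True # bs))]"

lemma ft_node_paths: "p \<in> set (node_paths (Node f [(False, A), (True, B)])) \<longleftrightarrow>
   (\<exists>q. (q \<in> set (node_paths A) \<and> p = ((f, False) # fst q, snd q)) \<or> (q \<in> set (node_paths B) \<and> p = ((f, True) # fst q, snd q)))"
proof -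
  have "set (node_paths (Node f [(False, A), (True, B)])) = (\<lambda>q. ((f,False)#fst q, snd q)) ` set (node_paths A) \<union> (\<lambda>q. ((f,True)#fst q, snd q)) ` set (node_paths B)"
    by simp
  then show ?thesis by blast
qed

lemma ft_paths: "p \<in> set (node_paths (ft \<nu> fs bs)) \<longleftrightarrow>
  (\<exists>ys. length ys = length fs \<and> p = (zip fs ys, SOME d. d \<in> \<nu> (rev bs @ ys)))"
proof (induction fs arbitrary: bs p)
  case Nil then show ?case by simp
next
  case (Cons f fs)
  show ?case
  proof
    assume "p \<in> set (node_paths (ft \<nu> (f # fs) bs))"
    then have "\<exists>b q. q \<in> set (node_paths (ft \<nu> fs (b # bs))) \<and> p = ((f, b) # fst q, snd q)"
      unfolding ft.simps ft_node_paths by blast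
    then obtain b q where bq: "q \<in> set (node_paths (ft \<nu> fs (b # bs)))" "p = ((f, b) # fst q, snd q)"
      by blast
    from bq(1) obtain ys where ys: "length ys = length fs" "q = (zip fs ys, SOME d. d \<in> \<nu> (rev (b # bs) @ ys))"
      using Cons.IH[where bs="b # bs" and p=q] by blast
    show "\<exists>ys. length ys = length (f # fs) \<and> p = (zip (f # fs) ys, SOME d. d \<in> \<nu> (rev bs @ ys))"
      using bq(2) ys by (intro exI[of _ "b # ys"]) simp
  next
    assume "\<exists>ys. length ys = length (f # fs) \<and> p = (zip (f # fs) ys, SOME d. d \<in> \<nu> (rev bs @ ys))"
    then obtain ys' where ys': "length ys' = Suc (length fs)" "p = (zip (f # fs) ys', SOME d. d \<in> \<nu> (rev bs @ ys'))"
      by auto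
    then obtain b ys where bys: "ys' = b # ys" by (cases ys') auto
    have ys: "length ys = length fs" using ys' bys by simp
    have q: "(zip fs ys, SOME d. d \<in> \<nu> (rev (b # bs) @ ys)) \<in> set (node_paths (ft \<nu> fs (b # bs)))"
      using Cons.IH[where bs="b # bs" and p="(zip fs ys, SOME d. d \<in> \<nu> (rev (b # bs) @ ys))"] ys by blast
    have p: "p = ((f, b) # fst (zip fs ys, SOME d. d \<in> \<nu> (rev (b # bs) @ ys)), snd (zip fs ys, SOME d. d \<in> \<nu> (rev (b # bs) @ ys)))"
      using ys'(2) bys by simp
    show "p \<in> set (node_paths (ft \<nu> (f # fs) bs))"
      unfolding ft.simps ft_node_paths
    proof (intro exI[of _ "(zip fs ys, SOME d. d \<in> \<nu> (rev (b # bs) @ ys))"])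
      show "(zip fs ys, SOME d. d \<in> \<nu> (rev (b # bs) @ ys)) \<in> set (node_paths (ft \<nu> fs (False # bs))) \<and>
          p = ((f, False) # fst (zip fs ys, SOME d. d \<in> \<nu> (rev (b # bs) @ ys)), snd (zip fs ys, SOME d. d \<in> \<nu> (rev (b # bs) @ ys))) \<or>
          (zip fs ys, SOME d. d \<in> \<nu> (rev (b # bs) @ ys)) \<in> set (node_paths (ft \<nu> fs (True # bs))) \<and>
          p = ((f, True) # fst (zip fs ys, SOME d. d \<in> \<nu> (rev (b # bs) @ ys)), snd (zip fs ys, SOME d. d \<in> \<nu> (rev (b # bs) @ ys)))"
        using q p by (cases b) simp_all
    qed
  qed
qed

lemma ft_wf: "wf_node (ft \<nu> fs bs)"
  by (induction fs arbitrary: bs) auto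

lemma ft_det: "det_node (ft \<nu> fs bs)"
  by (induction fs arbitrary: bs) auto

lemma ft_atts: "node_atts (ft \<nu> fs bs) \<subseteq> set fs"
  by (induction fs arbitrary: bs) auto

fun chainT :: "nat list \<Rightarrow> ((nat \<times> nat) \<times> bool) list \<Rightarrow> nat \<Rightarrow> dtree" where
  "chainT qa [] d = Leaf d"
| "chainT qa (l # ls) d = Node (qa ! pos (fst l)) [(\<not> snd l, chainT qa ls d)]"

definition word :: "nat list \<Rightarrow> ((nat \<times> nat) \<times> bool) list \<Rightarrow> (nat \<times> bool) list" where
  "word qa C = map (\<lambda>l. (qa ! pos (fst l), \<not> snd l)) C"

lemma chain_paths: "node_paths (chainT qa ls d) = [(word qa ls, d)]"
  unfolding word_def by (induction ls) auto

lemma chain_wf: "wf_node (chainT qa ls d)"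
  by (induction ls) auto

lemma chain_atts: "node_atts (chainT qa ls d) = (\<lambda>l. qa ! pos (fst l)) ` set ls"
  by (induction ls) auto

definition pnl :: "nat \<Rightarrow> (nat \<times> nat) list" where
  "pnl t = concat (map (\<lambda>r. map (\<lambda>s. (r, s)) [0..<Suc r]) [0..<t])"

lemma set_pnl: "set (pnl t) = {w. pnode t w}"
proof -
  have "w \<in> set (pnl t) \<longleftrightarrow> pnode t w" for w
    unfolding pnl_def pnode_def by (cases w) (auto simp: image_iff)
  then show ?thesis by auto
qed

definition Gam0 :: "nat list \<Rightarrow> nat \<Rightarrow> dtree list" where
  "Gam0 qa t = chainT qa sinkcl 0 # map (\<lambda>w. chainT qa (ncl t w) (Suc (pos w))) (pnl t)"

lemma Gam0_paths: "p \<in> set (tree_paths (Gam0 qa t)) \<longleftrightarrow>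
  p = (word qa sinkcl, 0) \<or> (\<exists>w. pnode t w \<and> p = (word qa (ncl t w), Suc (pos w)))"
  unfolding tree_paths_def Gam0_def using set_pnl[of t] by (auto simp: chain_paths)

lemma psi_le: "pb_measure \<psi> \<Longrightarrow> (\<forall>f\<in>set fs. \<psi> [f] \<le> n) \<Longrightarrow> \<psi> fs \<le> length fs * n"
proof (induction fs)
  case Nil
  then have "\<psi> [] = 0" unfolding pb_measure_def by blast
  then show ?case by simp
next
  case (Cons f fs)
  have "\<psi> ([f] @ fs) \<le> \<psi> [f] + \<psi> fs" using Cons.prems(1) unfolding pb_measure_def by blast
  then show ?case using Cons by simp
qed

context ptab
begin

lemma consw_word: "r \<in> set (rows T') \<Longrightarrow> (\<forall>l\<in>set C. pnode t (fst l)) \<Longrightarrow> consw T' (word qa C) r \<longleftrightarrow> fals C (fst r)"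
proof -
  assume r: "r \<in> set (rows T')" and C: "\<forall>l\<in>set C. pnode t (fst l)"
  have lr: "length (fst r) = k" using r row_iff by simp
  have "rval T' r (qa ! pos (fst l)) = fst r ! pos (fst l)" if "l \<in> set C" for l
    using rval_nth[OF pos_k lr] C that by simp
  then show ?thesis unfolding consw_def word_def fals_def by auto
qed

lemma nondet_Gam0: "nondet_tree_for (Gam0 qa t) T'"
  unfolding nondet_tree_for_def
proof (intro conjI)
  show "wf_dtree (Gam0 qa t)" unfolding wf_dtree_def Gam0_def using chain_wf by auto
  show "tree_atts (Gam0 qa t) \<subseteq> At T'"
  proof
    fix f assume "f \<in> tree_atts (Gam0 qa t)"
    then have "f \<in> node_atts (chainT qa sinkcl 0) \<or> (\<exists>w\<in>set (pnl t). f \<in> node_atts (chainT qa (ncl t w) (Suc (pos w))))"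
      unfolding tree_atts_def Gam0_def by simp
    then have "\<exists>l::(nat \<times> nat) \<times> bool. pnode t (fst l) \<and> f = qa ! pos (fst l)"
    proof
      assume "f \<in> node_atts (chainT qa sinkcl 0)"
      then obtain l where "l \<in> set sinkcl" "f = qa ! pos (fst l)" unfolding chain_atts by blast
      then show ?thesis using sink_node[OF t1] by blast
    next
      assume "\<exists>w\<in>set (pnl t). f \<in> node_atts (chainT qa (ncl t w) (Suc (pos w)))"
      then obtain w l where "pnode t w" "l \<in> set (ncl t w)" "f = qa ! pos (fst l)"
        unfolding chain_atts set_pnl by blast
      then show ?thesis using ncl_node by blast
    qed
    then obtain l :: "(nat \<times> nat) \<times> bool" where "pnode t (fst l)" "f = qa ! pos (fst l)" by blast
    then show "f \<in> At T'" unfolding AtT using pos_k lqa by simp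
  qed
  have sr: "r \<in> set (sub_rows T' w) \<longleftrightarrow> r \<in> set (rows T') \<and> consw T' w r" for r w
    unfolding sub_rows_def consw_def by auto
  have sinkn: "\<forall>l\<in>set sinkcl. pnode t (fst l)" using sink_node[OF t1] by blast
  have ncln: "\<forall>l\<in>set (ncl t w). pnode t (fst l)" if "pnode t w" for w using ncl_node[OF that] by blast
  show "\<forall>r\<in>set (rows T'). \<exists>\<tau>\<in>set (tree_paths (Gam0 qa t)). r \<in> set (sub_rows T' (fst \<tau>))"
  proof
    fix r assume r: "r \<in> set (rows T')"
    obtain d where "d \<in> nu t (fst r)" using nu_ne[OF t1] by blast
    then consider "fals sinkcl (fst r)" | w where "pnode t w" "fals (ncl t w) (fst r)"
      unfolding nu_def by blast
    then show "\<exists>\<tau>\<in>set (tree_paths (Gam0 qa t)). r \<in> set (sub_rows T' (fst \<tau>))"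
    proof cases
      case 1
      then have "r \<in> set (sub_rows T' (word qa sinkcl))" using sr consw_word[OF r sinkn] r by simp
      moreover have "(word qa sinkcl, 0) \<in> set (tree_paths (Gam0 qa t))" using Gam0_paths by simp
      ultimately show ?thesis by force
    next
      case 2
      then have "r \<in> set (sub_rows T' (word qa (ncl t w)))" using sr consw_word[OF r ncln[OF 2(1)]] r by simp
      moreover have "(word qa (ncl t w), Suc (pos w)) \<in> set (tree_paths (Gam0 qa t))" using Gam0_paths 2 by blast
      ultimately show ?thesis by force
    qed
  qed
  show "\<forall>\<tau>\<in>set (tree_paths (Gam0 qa t)). sub_rows T' (fst \<tau>) = [] \<or> snd \<tau> \<in> Pi_rows (sub_rows T' (fst \<tau>))"
  proof
    fix \<tau> assume "\<tau> \<in> set (tree_paths (Gam0 qa t))"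
    then have "\<forall>r\<in>set (sub_rows T' (fst \<tau>)). snd \<tau> \<in> snd r"
      unfolding Gam0_paths
    proof
      assume \<tau>: "\<tau> = (word qa sinkcl, 0)"
      show ?thesis
      proof
        fix r assume "r \<in> set (sub_rows T' (fst \<tau>))"
        then have r1: "r \<in> set (rows T')" and "consw T' (word qa sinkcl) r" using sr \<tau> by auto
        then have r: "r \<in> set (rows T')" "fals sinkcl (fst r)" using consw_word[OF r1 sinkn] by auto
        then have "0 \<in> nu t (fst r)" unfolding nu_def by simp
        then show "snd \<tau> \<in> snd r" using r(1) row_iff \<tau> by simp
      qed
    next
      assume "\<exists>w. pnode t w \<and> \<tau> = (word qa (ncl t w), Suc (pos w))"
      then obtain w where w: "pnode t w" "\<tau> = (word qa (ncl t w), Suc (pos w))" by blast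
      show ?thesis
      proof
        fix r assume "r \<in> set (sub_rows T' (fst \<tau>))"
        then have r1: "r \<in> set (rows T')" and "consw T' (word qa (ncl t w)) r" using sr w(2) by auto
        then have r: "r \<in> set (rows T')" "fals (ncl t w) (fst r)" using consw_word[OF r1 ncln[OF w(1)]] by auto
        then have "Suc (pos w) \<in> nu t (fst r)" unfolding nu_def using w(1) by blast
        then show "snd \<tau> \<in> snd r" using r(1) row_iff w(2) by simp
      qed
    qed
    then show "sub_rows T' (fst \<tau>) = [] \<or> snd \<tau> \<in> Pi_rows (sub_rows T' (fst \<tau>))"
      unfolding Pi_rows_def by blast
  qed
qed

lemma det_ft: "det_tree_for [ft (nu t) qa []] T'"
  unfolding det_tree_for_def nondet_tree_for_def
proof (intro conjI)
  have sr: "r \<in> set (sub_rows T' w) \<longleftrightarrow> r \<in> set (rows T') \<and> consw T' w r" for r w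
    unfolding sub_rows_def consw_def by auto
  have tp: "tree_paths [ft (nu t) qa []] = node_paths (ft (nu t) qa [])" unfolding tree_paths_def by simp
  show "wf_dtree [ft (nu t) qa []]" unfolding wf_dtree_def using ft_wf by simp
  show "tree_atts [ft (nu t) qa []] \<subseteq> At T'" unfolding tree_atts_def AtT using ft_atts by simp
  show "length [ft (nu t) qa []] = 1" by simp
  show "\<forall>v\<in>set [ft (nu t) qa []]. det_node v" using ft_det by simp
  have cw: "consw T' (zip qa ys) r \<longleftrightarrow> fst r = ys" if r: "r \<in> set (rows T')" and ys: "length ys = k" for r ys
  proof -
    have lr: "length (fst r) = k" using r row_iff by simp
    have "consw T' (zip qa ys) r \<longleftrightarrow> (\<forall>i<k. fst r ! i = ys ! i)"
      unfolding consw_def using rval_nth[OF _ lr] lqa ys by (auto simp: set_zip)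
    also have "\<dots> \<longleftrightarrow> fst r = ys" using lr ys by (auto simp: list_eq_iff_nth_eq)
    finally show ?thesis .
  qed
  show "\<forall>r\<in>set (rows T'). \<exists>\<tau>\<in>set (tree_paths [ft (nu t) qa []]). r \<in> set (sub_rows T' (fst \<tau>))"
  proof
    fix r assume r: "r \<in> set (rows T')"
    then have lr: "length (fst r) = k" using row_iff by simp
    have "(zip qa (fst r), SOME d. d \<in> nu t (rev [] @ fst r)) \<in> set (tree_paths [ft (nu t) qa []])"
      unfolding tp ft_paths using lr lqa by (intro exI[of _ "fst r"]) simp
    moreover have "r \<in> set (sub_rows T' (zip qa (fst r)))" using sr cw[OF r lr] r by simp
    ultimately show "\<exists>\<tau>\<in>set (tree_paths [ft (nu t) qa []]). r \<in> set (sub_rows T' (fst \<tau>))" by force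
  qed
  show "\<forall>\<tau>\<in>set (tree_paths [ft (nu t) qa []]). sub_rows T' (fst \<tau>) = [] \<or> snd \<tau> \<in> Pi_rows (sub_rows T' (fst \<tau>))"
  proof
    fix \<tau> assume "\<tau> \<in> set (tree_paths [ft (nu t) qa []])"
    then obtain ys where ys: "length ys = k" "\<tau> = (zip qa ys, SOME d. d \<in> nu t ys)"
      unfolding tp ft_paths using lqa by auto
    have "(SOME d. d \<in> nu t ys) \<in> nu t ys" using nu_ne[OF t1] by (simp add: some_in_eq)
    then have "\<forall>r\<in>set (sub_rows T' (fst \<tau>)). snd \<tau> \<in> snd r"
      using sr cw ys row_iff by auto
    then show "sub_rows T' (fst \<tau>) = [] \<or> snd \<tau> \<in> Pi_rows (sub_rows T' (fst \<tau>))"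
      unfolding Pi_rows_def by blast
  qed
qed

lemma notLambda: "2 \<le> t \<Longrightarrow> T' \<noteq> Lambda"
proof -
  assume "2 \<le> t"
  then have "3 \<le> t * Suc t div 2" using tri_mono[of 2 t] by simp
  then have "qa \<noteq> []" using tk lqa by auto
  then show ?thesis using attrs unfolding Lambda_def by auto
qed

lemma psi_a_bound:
  assumes pm: "pb_measure \<psi>" and qn: "\<forall>f\<in>set qa. \<psi> [f] \<le> n"
  shows "psi_a \<psi> T' \<le> 3 * n"
proof -
  let ?S = "(\<lambda>\<tau>. \<psi> (map fst (fst \<tau>))) ` set (tree_paths (Gam0 qa t))"
  have bnd: "a \<le> 3 * n" if a: "a \<in> ?S" for a
  proof -
    from a obtain \<tau> where \<tau>: "\<tau> \<in> set (tree_paths (Gam0 qa t))" "a = \<psi> (map fst (fst \<tau>))" by blast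
    have "\<exists>C::((nat \<times> nat) \<times> bool) list. fst \<tau> = word qa C \<and> length C \<le> 3 \<and> (\<forall>l\<in>set C. pnode t (fst l))"
      using \<tau>(1) unfolding Gam0_paths
    proof
      assume "\<tau> = (word qa sinkcl, 0)"
      moreover have "length sinkcl \<le> 3" unfolding sinkcl_def by simp
      moreover have "\<forall>l\<in>set sinkcl. pnode t (fst l)" using sink_node[OF t1] by blast
      ultimately show ?thesis by auto
    next
      assume "\<exists>w. pnode t w \<and> \<tau> = (word qa (ncl t w), Suc (pos w))"
      then obtain w where w: "pnode t w" "\<tau> = (word qa (ncl t w), Suc (pos w))" by blast
      moreover have "\<forall>l\<in>set (ncl t w). pnode t (fst l)" using ncl_node[OF w(1)] by blast
      ultimately show ?thesis using ncl_len[of t w] by auto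
    qed
    then obtain C :: "((nat \<times> nat) \<times> bool) list" where C: "fst \<tau> = word qa C" "length C \<le> 3" "\<forall>l\<in>set C. pnode t (fst l)"
      by blast
    have mf: "map fst (word qa C) = map (\<lambda>l. qa ! pos (fst l)) C" unfolding word_def by simp
    have "\<forall>f\<in>set (map fst (word qa C)). \<psi> [f] \<le> n"
    proof
      fix f assume "f \<in> set (map fst (word qa C))"
      then obtain l where "l \<in> set C" "f = qa ! pos (fst l)" unfolding mf by auto
      then have "f \<in> set qa" using C(3) pos_k lqa by auto
      then show "\<psi> [f] \<le> n" using qn by blast
    qed
    then have "\<psi> (map fst (word qa C)) \<le> length (map fst (word qa C)) * n" by (rule psi_le[OF pm])
    also have "\<dots> = length C * n" unfolding mf by simp
    also have "\<dots> \<le> 3 * n" using C(2) by simp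
    finally show ?thesis using \<tau>(2) C(1) by simp
  qed
  have "(word qa sinkcl, 0) \<in> set (tree_paths (Gam0 qa t))" using Gam0_paths by simp
  then have ne: "?S \<noteq> {}" by (metis empty_iff image_is_empty)
  have fin: "finite ?S" by simp
  have "Max ?S \<le> 3 * n" unfolding Max_le_iff[OF fin ne] using bnd by blast
  then have "psi_tree \<psi> (Gam0 qa t) \<le> 3 * n" unfolding psi_tree_def .
  moreover have "psi_a \<psi> T' \<le> psi_tree \<psi> (Gam0 qa t)"
  proof (cases "T' = Lambda")
    case True then show ?thesis unfolding psi_a_def by simp
  next
    case False
    have "(LEAST m. \<exists>\<Gamma>. nondet_tree_for \<Gamma> T' \<and> psi_tree \<psi> \<Gamma> = m) \<le> psi_tree \<psi> (Gam0 qa t)"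
      by (rule Least_le) (use nondet_Gam0 in blast)
    then show ?thesis unfolding psi_a_def using False by simp
  qed
  ultimately show ?thesis by simp
qed

lemma psi_d_bound:
  assumes bm: "bounded_measure \<psi>" and t2: "2 \<le> t"
  shows "t \<le> psi_d \<psi> T'"
proof -
  let ?P = "\<lambda>m. \<exists>\<Gamma>. det_tree_for \<Gamma> T' \<and> psi_tree \<psi> \<Gamma> = m"
  have "?P (psi_tree \<psi> [ft (nu t) qa []])" using det_ft by blast
  then have "?P (Least ?P)" by (rule LeastI)
  then obtain \<Gamma> where \<Gamma>: "det_tree_for \<Gamma> T'" "psi_tree \<psi> \<Gamma> = Least ?P" by blast
  have pd: "psi_d \<psi> T' = psi_tree \<psi> \<Gamma>" unfolding psi_d_def using notLambda[OF t2] \<Gamma>(2) by simp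
  obtain p where p: "p \<in> set (tree_paths \<Gamma>)" "t - 1 < length (fst p)"
    using det_lower[OF \<Gamma>(1) G_start[OF t2]] by blast
  have "t \<le> length (fst p)" using p(2) t2 by simp
  also have "\<dots> = length (map fst (fst p))" by simp
  also have "\<dots> \<le> \<psi> (map fst (fst p))" using bm unfolding bounded_measure_def by blast
  also have "\<dots> \<le> psi_tree \<psi> \<Gamma>"
  proof -
    have "\<psi> (map fst (fst p)) \<in> (\<lambda>\<tau>. \<psi> (map fst (fst \<tau>))) ` set (tree_paths \<Gamma>)" using p(1) by (rule imageI)
    then show ?thesis unfolding psi_tree_def by (rule Max_ge[rotated]) simp
  qed
  finally show ?thesis using pd by simp
qed

end



lemma dedup_fst: "fst ` set (dedup xs) = fst ` set xs"
proof (induction xs rule: dedup.induct)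
  case 1 then show ?case by simp
next
  case (2 x xs)
  have "fst ` set (filter (\<lambda>y. fst y \<noteq> fst x) xs) = fst ` set xs - {fst x}" by auto
  then show ?case using 2 by auto
qed

lemma dedup_sub: "set (dedup xs) \<subseteq> set xs"
proof (induction xs rule: dedup.induct)
  case 1 then show ?case by simp
next
  case (2 x xs) then show ?case by auto
qed

lemma exists_t: "\<exists>t::nat. t * (t + 1) \<le> 2 * k \<and> 2 * k < (t + 1) * (t + 2)"
proof (induction k)
  case 0 then show ?case by (intro exI[of _ 0]) simp
next
  case (Suc k)
  then obtain t where t: "t * (t + 1) \<le> 2 * k" "2 * k < (t + 1) * (t + 2)" by blast
  show ?case
  proof (cases "2 * Suc k < (t + 1) * (t + 2)")
    case True then show ?thesis using t by (intro exI[of _ t]) simp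
  next
    case False
    have "(t + 2) * (t + 3) = (t + 1) * (t + 2) + 2 * (t + 2)" by (simp add: algebra_simps)
    then show ?thesis using False t by (intro exI[of _ "t + 1"]) (simp add: algebra_simps)
  qed
qed

lemma At_J: "At (J_op \<nu> X) = At X" unfolding J_op_def At_def by simp

lemma At_I: "At (I_op D T) \<subseteq> At T" unfolding I_op_def At_def Lambda_def by auto

lemma cl_At: "Q \<in> cl_tab T \<Longrightarrow> At Q \<subseteq> At T"
proof -
  assume "Q \<in> cl_tab T"
  then obtain D \<nu> where "Q = J_op \<nu> (I_op D T)" unfolding cl_tab_def by blast
  then show ?thesis using At_J At_I by simp
qed

lemma complete_rows:
  assumes wf: "wf_tab Q" and c: "complete_tab Q"
  shows "fst ` set (rows Q) = {xs. length xs = length (attrs Q)}"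
proof -
  let ?k = "length (attrs Q)"
  have sub: "fst ` set (rows Q) \<subseteq> {xs. length xs = ?k}" using wf unfolding wf_tab_def by auto
  have "card (fst ` set (rows Q)) = length (rows Q)"
    using wf distinct_card[of "map fst (rows Q)"] unfolding wf_tab_def by simp
  also have "\<dots> = 2 ^ card (At Q)" using c unfolding complete_tab_def N_def by simp
  also have "\<dots> = 2 ^ ?k" using wf distinct_card[of "attrs Q"] unfolding wf_tab_def At_def by simp
  also have "\<dots> = card {xs :: bool list. length xs = ?k}"
    using card_lists_length_eq[of "UNIV :: bool set" ?k] by simp
  finally have "card (fst ` set (rows Q)) = card {xs :: bool list. length xs = ?k}" .
  moreover have "finite {xs :: bool list. length xs = ?k}"
    using finite_lists_length_eq[of "UNIV :: bool set" ?k] by simp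
  ultimately show ?thesis using card_subset_eq sub by blast
qed

lemma key_table:
  assumes cc: "closed_class A" and bm: "bounded_measure \<psi>"
    and QA: "Q \<in> A" and c: "complete_tab Q" and k3: "3 \<le> card (At Q)"
    and qn: "\<forall>f\<in>At Q. \<psi> [f] \<le> n"
  shows "\<exists>T'\<in>A. psi_a \<psi> T' \<le> 3 * n \<and> sqrt (2 * real (card (At Q))) - 3 \<le> real (psi_d \<psi> T')"
proof -
  have wf: "wf_tab Q" using cc QA unfolding closed_class_def M2_def by auto
  define qa where "qa = attrs Q"
  define k where "k = length qa"
  have dqa: "distinct qa" using wf unfolding wf_tab_def qa_def by simp
  have kc: "card (At Q) = k" unfolding At_def k_def qa_def using distinct_card[OF dqa[unfolded qa_def]] by simp
  obtain t where t: "t * (t + 1) \<le> 2 * k" "2 * k < (t + 1) * (t + 2)" using exists_t by blast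
  have t2: "2 \<le> t"
  proof (rule ccontr)
    assume "\<not> 2 \<le> t"
    then have "t \<le> 1" by simp
    then have "(t + 1) * (t + 2) \<le> 2 * 3" using mult_le_mono[of "t+1" 2 "t+2" 3] by simp
    then show False using t(2) k3 kc by simp
  qed
  have tk: "t * Suc t div 2 \<le> k" using t(1) by simp
  define T' where "T' = J_op (nu t) (I_op {} Q)"
  have qne: "qa \<noteq> []" using k3 kc k_def by auto
  have IQ: "I_op {} Q = Tab qa (dedup (rows Q))"
  proof -
    have "\<not> At Q \<subseteq> {}" using qne unfolding At_def qa_def by simp
    moreover have "map (\<lambda>r. (map snd (filter (\<lambda>p. fst p \<notin> {}) (zip (attrs Q) (fst r))), snd r)) (rows Q) = rows Q"
    proof (rule map_idI)
      fix r assume "r \<in> set (rows Q)"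
      then have "length (fst r) = length (attrs Q)" using wf unfolding wf_tab_def by auto
      then show "(map snd (filter (\<lambda>p. fst p \<notin> {}) (zip (attrs Q) (fst r))), snd r) = r" by simp
    qed
    ultimately show ?thesis unfolding I_op_def qa_def by simp
  qed
  have attrsT: "attrs T' = qa" unfolding T'_def IQ J_op_def by simp
  have rowsT: "set (rows T') = (\<lambda>xs. (xs, nu t xs)) ` {xs. length xs = k}"
  proof -
    have "set (rows T') = (\<lambda>r. (fst r, nu t (fst r))) ` set (dedup (rows Q))"
      unfolding T'_def IQ J_op_def by simp
    also have "\<dots> = (\<lambda>xs. (xs, nu t xs)) ` fst ` set (dedup (rows Q))" by (simp add: image_image)
    also have "\<dots> = (\<lambda>xs. (xs, nu t xs)) ` {xs. length xs = k}"
      unfolding dedup_fst complete_rows[OF wf c] k_def qa_def ..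
    finally show ?thesis .
  qed
  interpret ptab T' qa k t
    using attrsT dqa rowsT tk t2 k_def by unfold_locales auto
  have T'A: "T' \<in> A"
  proof -
    have "\<forall>\<delta>. length \<delta> = card (At Q - {}) \<longrightarrow> finite (nu t \<delta>) \<and> nu t \<delta> \<noteq> {}"
      using nu_finite[of t] nu_ne[of t] t2 by simp
    then have "T' \<in> cl_tab Q" unfolding cl_tab_def T'_def by blast
    then have "T' \<in> cl A" unfolding cl_def using QA by blast
    then show ?thesis using cc unfolding closed_class_def by simp
  qed
  have pa: "psi_a \<psi> T' \<le> 3 * n"
    using psi_a_bound[of \<psi> n] bm qn unfolding bounded_measure_def At_def qa_def by blast
  have pd: "t \<le> psi_d \<psi> T'" using psi_d_bound[OF bm t2] .
  have "2 * real k \<le> (real t + 2) ^ 2"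
  proof -
    have "2 * k \<le> (t + 2) * (t + 2)" using t(2) mult_le_mono[of "t+1" "t+2" "t+2" "t+2"] by simp
    then have "real (2 * k) \<le> real ((t + 2) * (t + 2))" by (simp only: of_nat_le_iff)
    then show ?thesis by (simp add: power2_eq_square algebra_simps)
  qed
  then have "sqrt (2 * real k) \<le> real t + 2" by (intro real_le_lsqrt) auto
  then have "sqrt (2 * real (card (At Q))) - 3 \<le> real (psi_d \<psi> T')" using kc pd by simp
  then show ?thesis using T'A pa by blast
qed

lemma Lambda_in: "closed_class A \<Longrightarrow> nontrivial A \<Longrightarrow> Lambda \<in> A"
proof -
  assume cc: "closed_class A" and "nontrivial A"
  then obtain T where T: "T \<in> A" unfolding nontrivial_def by blast
  have "J_op (\<lambda>_. {0}) (I_op (At T) T) \<in> cl_tab T" unfolding cl_tab_def by blast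
  moreover have "J_op (\<lambda>_. {0}) (I_op (At T) T) = Lambda" unfolding I_op_def J_op_def Lambda_def by simp
  ultimately have "Lambda \<in> cl A" unfolding cl_def using T by auto
  then show ?thesis using cc unfolding closed_class_def by simp
qed

lemma main_bound:
  assumes cc: "closed_class A" and bm: "bounded_measure \<psi>"
    and fin: "finite {psi_d \<psi> T | T. T \<in> A \<and> psi_a \<psi> T \<le> 3 * n}"
    and TA: "T \<in> A_psi \<psi> A n"
  shows "sqrt (2 * real (Z T)) - 3 \<le> real (Max {psi_d \<psi> T | T. T \<in> A \<and> psi_a \<psi> T \<le> 3 * n})"
proof (cases "3 \<le> Z T")
  case False
  then have "2 * real (Z T) \<le> 3 ^ 2" by simp
  then have "sqrt (2 * real (Z T)) \<le> 3" by (intro real_le_lsqrt) auto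
  then show ?thesis by simp
next
  case True
  have T: "T \<in> A" "m_psi \<psi> T \<le> n" using TA unfolding A_psi_def by auto
  let ?C = "{card (At Q) | Q. Q \<in> cl_tab T \<and> complete_tab Q}"
  have nz: "\<not> (T = Lambda \<or> \<not> (\<exists>Q\<in>cl_tab T. complete_tab Q))"
  proof
    assume "T = Lambda \<or> \<not> (\<exists>Q\<in>cl_tab T. complete_tab Q)"
    then have "Z T = 0" unfolding Z_def by simp
    then show False using True by simp
  qed
  then have ZT: "Z T = Max ?C" unfolding Z_def by simp
  have "?C \<subseteq> {..card (At T)}"
  proof
    fix x assume "x \<in> ?C"
    then obtain Q where Qx: "x = card (At Q)" "Q \<in> cl_tab T" by blast
    have "At Q \<subseteq> At T" using cl_At[OF Qx(2)] .
    moreover have "finite (At T)" unfolding At_def by simp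
    ultimately have "card (At Q) \<le> card (At T)" by (rule card_mono[rotated])
    then show "x \<in> {..card (At T)}" using Qx(1) by simp
  qed
  then have finC: "finite ?C" by (rule finite_subset) simp
  have "?C \<noteq> {}" using nz by blast
  then have "Max ?C \<in> ?C" using finC by (rule Max_in[rotated])
  then obtain Q where Q: "Z T = card (At Q)" "Q \<in> cl_tab T" "complete_tab Q" using ZT by auto
  have "Q \<in> cl A" unfolding cl_def using Q(2) T(1) by blast
  then have QA: "Q \<in> A" using cc unfolding closed_class_def by simp
  have qn: "\<forall>f\<in>At Q. \<psi> [f] \<le> n"
  proof
    fix f assume "f \<in> At Q"
    then have fT: "f \<in> At T" using cl_At[OF Q(2)] by blast
    have "finite (At T)" unfolding At_def by simp
    then have "\<psi> [f] \<le> Max ((\<lambda>f. \<psi> [f]) ` At T)" using fT by (intro Max_ge) auto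
    also have "\<dots> = m_psi \<psi> T" unfolding m_psi_def using fT by auto
    finally show "\<psi> [f] \<le> n" using T(2) by simp
  qed
  obtain T' where T': "T' \<in> A" "psi_a \<psi> T' \<le> 3 * n" "sqrt (2 * real (card (At Q))) - 3 \<le> real (psi_d \<psi> T')"
    using key_table[OF cc bm QA Q(3) _ qn] True Q(1) by auto
  have "psi_d \<psi> T' \<in> {psi_d \<psi> T | T. T \<in> A \<and> psi_a \<psi> T \<le> 3 * n}" using T'(1,2) by blast
  then have "psi_d \<psi> T' \<le> Max {psi_d \<psi> T | T. T \<in> A \<and> psi_a \<psi> T \<le> 3 * n}"
    using fin by (rule Max_ge[rotated])
  then have "real (psi_d \<psi> T') \<le> real (Max {psi_d \<psi> T | T. T \<in> A \<and> psi_a \<psi> T \<le> 3 * n})"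
    by (simp only: of_nat_le_iff)
  then show ?thesis using T'(3) Q(1) by simp
qed

theorem lemma12:
  fixes A :: "tab set" and \<psi> :: "nat list \<Rightarrow> nat"
  assumes "closed_class A" and "nontrivial A" and "bounded_measure \<psi>"
    and "\<forall>n. H_psiA \<psi> A n \<noteq> None"
  shows "\<forall>n. Z_psiA \<psi> A n \<noteq> None \<and>
           real (the (H_psiA \<psi> A (3 * n))) \<ge> sqrt (2 * real (the (Z_psiA \<psi> A n))) - 3"
proof
  fix n
  let ?S = "{psi_d \<psi> T | T. T \<in> A \<and> psi_a \<psi> T \<le> 3 * n}"
  have "H_psiA \<psi> A (3 * n) \<noteq> None" using assms(4) by blast
  then have finS: "finite ?S" unfolding H_psiA_def Let_def by (simp split: if_splits)
  have H: "the (H_psiA \<psi> A (3 * n)) = Max ?S" unfolding H_psiA_def Let_def using finS by simp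
  let ?M = "Max ?S"
  have bnd: "sqrt (2 * real (Z T)) - 3 \<le> real ?M" if "T \<in> A_psi \<psi> A n" for T
    using main_bound[OF assms(1,3) finS that] .
  have zb: "Z T \<le> (?M + 3) ^ 2" if "T \<in> A_psi \<psi> A n" for T
  proof -
    have "sqrt (2 * real (Z T)) \<le> real ?M + 3" using bnd[OF that] by simp
    then have "2 * real (Z T) \<le> (real ?M + 3) ^ 2" by (rule sqrt_le_D)
    then have "real (Z T) \<le> real ((?M + 3) ^ 2)" by simp
    then show ?thesis by (simp only: of_nat_le_iff)
  qed
  have finZ: "finite (Z ` A_psi \<psi> A n)"
    by (rule finite_subset[of _ "{..(?M + 3) ^ 2}"]) (use zb in auto)
  have Zs: "the (Z_psiA \<psi> A n) = Max (Z ` A_psi \<psi> A n)" "Z_psiA \<psi> A n \<noteq> None"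
    unfolding Z_psiA_def Let_def using finZ by simp_all
  have "Lambda \<in> A_psi \<psi> A n" using Lambda_in[OF assms(1,2)]
    unfolding A_psi_def m_psi_def At_def Lambda_def by simp
  then have "Z ` A_psi \<psi> A n \<noteq> {}" by blast
  then have "Max (Z ` A_psi \<psi> A n) \<in> Z ` A_psi \<psi> A n" using finZ by (rule Max_in[rotated])
  then obtain T where T: "T \<in> A_psi \<psi> A n" "Max (Z ` A_psi \<psi> A n) = Z T" by auto
  show "Z_psiA \<psi> A n \<noteq> None \<and> real (the (H_psiA \<psi> A (3 * n))) \<ge> sqrt (2 * real (the (Z_psiA \<psi> A n))) - 3"
    using Zs bnd[OF T(1)] T(2) H by simp
qed


end
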